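(* Let $q\in\mathbb{N}$, and for $i=1,\dots,q$ let $n_i\in\mathbb{N}$, $f_i:\mathbb{R}^{n_i}\to\mathbb{R}\cup\{+\infty\}$ be proper, closed, convex, and $A_i\in\mathbb{R}^{p\times n_i}$; let $c\in\mathbb{R}^p$. Consider $$\min_{x_1,\dots,x_q}\ \sum_{i=1}^q f_i(x_i)\quad\text{subject to}\quad \sum_{i=1}^q A_ix_i=c.$$ Assume that the Lagrangian $\mathcal{L}_0(x_1,\dots,x_q,y)=\sum_{i=1}^q f_i(x_i)+y^T(\sum_{i=1}^qA_ix_i-c)$ has a saddle point (max over $y\in\mathbb{R}^p$ of min over $x_i\in\mathbb{R}^{n_i}$ equals min over $x_i$ of max over $y$, and this saddle-point problem has a solution). Let $\rho\in[0,+\infty)$ and let $\tilde M_\rho$ be the block matrix whose $(i,j)$ block for $1\le i,j\le q$ is $\rho A_i^TA_j$, whose $(i,q+1)$ block is $A_i^T$ for $1\le i\le q$, whose $(q+1,j)$ block is $-A_j$ for $1\le j\le q$, and whose $(q+1,q+1)$ block is $0_{p\times p}$. Let $\tilde L>0$ satisfy $\|\tilde M_\rho\|_2\le\tilde L$ and let $\eta\in(0,\frac{1}{2\tilde L})$. For arbitrary initial points $x_{i,0},x_{i,-1}\in\mathbb{R}^{n_i}$ ($i=1,\dots,q$) and $y_0,y_{-1}\in\mathbb{R}^p$, define for $k=0,1,2,\dots$ and each $i=1,\dots,q$: $$\hat x_{i,k}=x_{i,k}-2\eta A_i^Ty_k-2\eta\rho\sum_{j=1}^qA_i^TA_jx_{j,k}+\eta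 A_i^Ty_{k-1}+\eta\rho\sum_{j=1}^qA_i^TA_jx_{j,k-1}+\eta\rho A_i^Tc,$$ $$x_{i,k+1}=\arg\min_{u_i\in\mathbb{R}^{n_i}}\Big(\eta f_i(u_i)+\tfrac12\|u_i-\hat x_{i,k}\|_2^2\Big),$$ $$y_{k+1}=y_k+2\eta\sum_{i=1}^qA_ix_{i,k}-\eta\sum_{i=1}^qA_ix_{i,k-1}-\eta c.$$ Then for each $i$ the sequence $\{x_{i,k}\}_{k\ge-1}$ converges, and the limit $(x_1^*,\dots,x_q^* )$ is a solution of the optimization problem.
   Context: $\|\cdot\|_2$ denotes the Euclidean norm on vectors and the spectral norm (largest singular value) on matrices. *)

theory Defs
  imports "HOL-Analysis.Analysis"
begin

text \<open>Vectors of R^n are represented as functions nat => real that vanish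
  at indices >= n; a p x n matrix is a function nat => nat => real whose
  entries (r,j) with r < p, j < n are used.  Block indices i = 1..q are
  rendered 0-based as i < q.\<close>

definition Vsp :: "nat \<Rightarrow> (nat \<Rightarrow> real) set" where
  "Vsp n = {x. \<forall>j\<ge>n. x j = 0}"

definition inner_n :: "nat \<Rightarrow> (nat \<Rightarrow> real) \<Rightarrow> (nat \<Rightarrow> real) \<Rightarrow> real" where
  "inner_n n u v = (\<Sum>j<n. u j * v j)"

definition norm2 :: "nat \<Rightarrow> (nat \<Rightarrow> real) \<Rightarrow> real" where
  "norm2 n u = sqrt (\<Sum>j<n. (u j)\<^sup>2)"

definition Av :: "(nat \<Rightarrow> nat \<Rightarrow> real) \<Rightarrow> nat \<Rightarrow> nat \<Rightarrow> (nat \<Rightarrow> real) \<Rightarrow> (nat \<Rightarrow> real)" where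
  "Av A p n x = (\<lambda>r. if r < p then (\<Sum>j<n. A r j * x j) else 0)"

definition ATv :: "(nat \<Rightarrow> nat \<Rightarrow> real) \<Rightarrow> nat \<Rightarrow> nat \<Rightarrow> (nat \<Rightarrow> real) \<Rightarrow> (nat \<Rightarrow> real)" where
  "ATv A p n y = (\<lambda>j. if j < n then (\<Sum>r<p. A r j * y r) else 0)"

definition spec_norm :: "nat \<Rightarrow> (nat \<Rightarrow> nat \<Rightarrow> real) \<Rightarrow> real" where
  "spec_norm m M = Sup ((\<lambda>z. norm2 m (Av M m m z)) ` {z \<in> Vsp m. norm2 m z \<le> 1})"

definition off :: "(nat \<Rightarrow> nat) \<Rightarrow> nat \<Rightarrow> nat" where
  "off n i = (\<Sum>j<i. n j)"

definition Mtilde :: "nat \<Rightarrow> (nat \<Rightarrow> nat) \<Rightarrow> nat \<Rightarrow> (nat \<Rightarrow> nat \<Rightarrow> nat \<Rightarrow> real) \<Rightarrow> real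
    \<Rightarrow> nat \<Rightarrow> nat \<Rightarrow> real" where
  "Mtilde q n p A \<rho> r s =
     (let N = off n q in
      (\<Sum>i<q. \<Sum>j<q. if off n i \<le> r \<and> r < off n (Suc i) \<and> off n j \<le> s \<and> s < off n (Suc j)
          then \<rho> * (\<Sum>l<p. A i l (r - off n i) * A j l (s - off n j)) else 0)
      + (\<Sum>i<q. if off n i \<le> r \<and> r < off n (Suc i) \<and> N \<le> s \<and> s < N + p
          then A i (s - N) (r - off n i) else 0)
      + (\<Sum>j<q. if N \<le> r \<and> r < N + p \<and> off n j \<le> s \<and> s < off n (Suc j)
          then - A j (r - N) (s - off n j) else 0))"

definition proper_fn :: "nat \<Rightarrow> ((nat \<Rightarrow> real) \<Rightarrow> ereal) \<Rightarrow> bool" where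
  "proper_fn n f \<longleftrightarrow> (\<forall>x\<in>Vsp n. f x \<noteq> -\<infinity>) \<and> (\<exists>x\<in>Vsp n. f x \<noteq> \<infinity>)"

definition closed_fn :: "nat \<Rightarrow> ((nat \<Rightarrow> real) \<Rightarrow> ereal) \<Rightarrow> bool" where
  "closed_fn n f \<longleftrightarrow> (\<forall>u r x t. (\<forall>k. u k \<in> Vsp n \<and> f (u k) \<le> ereal (r k)) \<and> x \<in> Vsp n
      \<and> (\<lambda>k. norm2 n (\<lambda>j. u k j - x j)) \<longlonglongrightarrow> 0 \<and> r \<longlonglongrightarrow> t \<longrightarrow> f x \<le> ereal t)"

definition convex_fn :: "nat \<Rightarrow> ((nat \<Rightarrow> real) \<Rightarrow> ereal) \<Rightarrow> bool" where
  "convex_fn n f \<longleftrightarrow> (\<forall>x\<in>Vsp n. \<forall>y\<in>Vsp n. \<forall>a b t. f x \<le> ereal a \<and> f y \<le> ereal b \<and> 0 \<le> t \<and> t \<le> 1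
      \<longrightarrow> f (\<lambda>j. t * x j + (1 - t) * y j) \<le> ereal (t * a + (1 - t) * b))"

definition sumAx :: "nat \<Rightarrow> (nat \<Rightarrow> nat) \<Rightarrow> nat \<Rightarrow> (nat \<Rightarrow> nat \<Rightarrow> nat \<Rightarrow> real)
    \<Rightarrow> (nat \<Rightarrow> nat \<Rightarrow> real) \<Rightarrow> (nat \<Rightarrow> real)" where
  "sumAx q n p A x = (\<lambda>r. \<Sum>i<q. Av (A i) p (n i) (x i) r)"

definition Lag0 :: "nat \<Rightarrow> (nat \<Rightarrow> nat) \<Rightarrow> nat \<Rightarrow> (nat \<Rightarrow> (nat \<Rightarrow> real) \<Rightarrow> ereal)
    \<Rightarrow> (nat \<Rightarrow> nat \<Rightarrow> nat \<Rightarrow> real) \<Rightarrow> (nat \<Rightarrow> real) \<Rightarrow> (nat \<Rightarrow> nat \<Rightarrow> real) \<Rightarrow> (nat \<Rightarrow> real) \<Rightarrow> ereal" where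
  "Lag0 q n p f A c x y = (\<Sum>i<q. f i (x i))
      + ereal (inner_n p y (\<lambda>r. sumAx q n p A x r - c r))"

definition has_saddle_point where
  "has_saddle_point q n p f A c \<longleftrightarrow>
     (\<exists>xs ys. (\<forall>i<q. xs i \<in> Vsp (n i)) \<and> ys \<in> Vsp p \<and>
        (\<forall>x y. (\<forall>i<q. x i \<in> Vsp (n i)) \<and> y \<in> Vsp p \<longrightarrow>
           Lag0 q n p f A c xs y \<le> Lag0 q n p f A c xs ys \<and>
           Lag0 q n p f A c xs ys \<le> Lag0 q n p f A c x ys))"

definition is_solution where
  "is_solution q n p f A c xs \<longleftrightarrow>
     (\<forall>i<q. xs i \<in> Vsp (n i)) \<and> (\<forall>r<p. sumAx q n p A xs r = c r) \<and>
     (\<forall>x. (\<forall>i<q. x i \<in> Vsp (n i)) \<and> (\<forall>r<p. sumAx q n p A x r = c r)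
        \<longrightarrow> (\<Sum>i<q. f i (xs i)) \<le> (\<Sum>i<q. f i (x i)))"

end

theory Submission
  imports Defs
begin

lemma off_Suc: "off n (Suc i) = off n i + n i" by (simp add: off_def)
lemma off_mono: "i \<le> j \<Longrightarrow> off n i \<le> off n j"
  by (induction j) (auto simp: off_Suc le_Suc_eq)
lemma sum_lessThan_add_split: "(\<Sum>r<a+b. h r) = (\<Sum>r<a. h r) + (\<Sum>l<b. h (a+l))"
  for h :: "nat \<Rightarrow> 'a::comm_monoid_add"
  by (induction b) (simp_all add: add.assoc)
lemma sum_off: "(\<Sum>r<off n q. h r) = (\<Sum>i<q. \<Sum>l<n i. h (off n i + l))"
  for h :: "nat \<Rightarrow> 'a::comm_monoid_add"
  by (induction q) (simp_all add: off_Suc sum_lessThan_add_split off_def)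
lemma block_iff: "l < n i \<Longrightarrow> (off n i' \<le> off n i + l \<and> off n i + l < off n (Suc i')) = (i' = i)"
proof (cases "i' < i")
  case True
  then have "off n (Suc i') \<le> off n i" by (intro off_mono) auto
  then show ?thesis using True by auto
next
  case False
  assume l: "l < n i"
  show ?thesis
  proof (cases "i' = i")
    case True then show ?thesis using l by (simp add: off_Suc)
  next
    case F2: False
    with False have "Suc i \<le> i'" by auto
    then have "off n (Suc i) \<le> off n i'" by (rule off_mono)
    then show ?thesis using l F2 by (simp add: off_Suc)
  qed
qed
lemma block_N: "i' < q \<Longrightarrow> \<not> (off n i' \<le> off n q + m \<and> off n q + m < off n (Suc i'))"
  using off_mono[of "Suc i'" q n] by auto

lemma norm2_nonneg: "0 \<le> norm2 m z" unfolding norm2_def by (intro real_sqrt_ge_zero sum_nonneg) simp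
lemma norm2_sq: "(norm2 m z)\<^sup>2 = (\<Sum>j<m. (z j)\<^sup>2)"
  unfolding norm2_def by (rule real_sqrt_pow2) (intro sum_nonneg, simp)
lemma norm2_coord: "j < m \<Longrightarrow> \<bar>z j\<bar> \<le> norm2 m z"
proof -
  assume j: "j < m"
  have "(z j)\<^sup>2 \<le> (\<Sum>j<m. (z j)\<^sup>2)" using j by (intro member_le_sum) auto
  then have "sqrt ((z j)\<^sup>2) \<le> norm2 m z" unfolding norm2_def by (rule real_sqrt_le_mono)
  then show ?thesis by simp
qed
lemma norm2_scale: "norm2 m (\<lambda>j. t * z j) = \<bar>t\<bar> * norm2 m z"
proof -
  have "(\<Sum>j<m. (t * z j)\<^sup>2) = t\<^sup>2 * (\<Sum>j<m. (z j)\<^sup>2)"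
    by (simp add: power_mult_distrib sum_distrib_left)
  then show ?thesis by (simp add: norm2_def real_sqrt_mult)
qed
lemma Av_scale: "Av M m m (\<lambda>j. t * z j) = (\<lambda>r. t * Av M m m z r)"
  by (auto simp: Av_def sum_distrib_left mult.left_commute)
lemma norm2_zero: "norm2 m z = 0 \<Longrightarrow> j < m \<Longrightarrow> z j = 0"
  using norm2_coord[of j m z] by auto
lemma norm2_cong: "(\<And>j. j < m \<Longrightarrow> z j = w j) \<Longrightarrow> norm2 m z = norm2 m w"
  by (simp add: norm2_def)

lemma spec_bdd: "bdd_above ((\<lambda>z. norm2 m (Av M m m z)) ` {z \<in> Vsp m. norm2 m z \<le> 1})"
proof -
  define B where "B = sqrt (\<Sum>r<m. (\<Sum>j<m. \<bar>M r j\<bar>)\<^sup>2)"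
  have "norm2 m (Av M m m z) \<le> B" if z: "norm2 m z \<le> 1" for z
  proof -
    have "(Av M m m z r)\<^sup>2 \<le> (\<Sum>j<m. \<bar>M r j\<bar>)\<^sup>2" if r: "r < m" for r
    proof -
      have "\<bar>Av M m m z r\<bar> \<le> (\<Sum>j<m. \<bar>M r j * z j\<bar>)"
        using r by (simp add: Av_def sum_abs)
      also have "\<dots> \<le> (\<Sum>j<m. \<bar>M r j\<bar>)"
      proof (intro sum_mono)
        fix j assume "j \<in> {..<m}"
        then have "\<bar>z j\<bar> \<le> 1" using norm2_coord[of j m z] z by auto
        then show "\<bar>M r j * z j\<bar> \<le> \<bar>M r j\<bar>"
          by (simp add: abs_mult mult_left_le)
      qed
      finally have "\<bar>Av M m m z r\<bar> \<le> \<bar>\<Sum>j<m. \<bar>M r j\<bar>\<bar>" by simp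
      then show ?thesis by (simp only: abs_le_square_iff)
    qed
    then have "(\<Sum>r<m. (Av M m m z r)\<^sup>2) \<le> (\<Sum>r<m. (\<Sum>j<m. \<bar>M r j\<bar>)\<^sup>2)"
      by (intro sum_mono) auto
    then show ?thesis unfolding norm2_def B_def by (rule real_sqrt_le_mono)
  qed
  then show ?thesis by (auto intro!: bdd_aboveI[of _ B])
qed

lemma spec_nonneg: "0 \<le> spec_norm m M"
proof -
  have z: "(\<lambda>_. 0) \<in> {z \<in> Vsp m. norm2 m z \<le> 1}" by (simp add: Vsp_def norm2_def)
  have "0 \<le> norm2 m (Av M m m (\<lambda>_. 0))" by (rule norm2_nonneg)
  also have "\<dots> \<le> spec_norm m M" unfolding spec_norm_def
    by (rule cSup_upper[OF imageI[OF z] spec_bdd])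
  finally show ?thesis .
qed

lemma spec_bound: assumes z: "z \<in> Vsp m"
  shows "norm2 m (Av M m m z) \<le> spec_norm m M * norm2 m z"
proof (cases "norm2 m z = 0")
  case True
  then have "Av M m m z = (\<lambda>_. 0)" by (auto simp: Av_def norm2_zero)
  then show ?thesis using True by (simp add: norm2_def)
next
  case False
  define t where "t = norm2 m z"
  have t: "0 < t" using False norm2_nonneg[of m z] by (simp add: t_def)
  define w where "w = (\<lambda>j. (1/t) * z j)"
  have "norm2 m w = 1" unfolding w_def norm2_scale using t by (simp add: t_def)
  then have w: "w \<in> {z \<in> Vsp m. norm2 m z \<le> 1}"
    using z by (auto simp: w_def Vsp_def)
  have "norm2 m (Av M m m w) \<le> spec_norm m M" unfolding spec_norm_def
    by (rule cSup_upper[OF imageI[OF w] spec_bdd])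
  moreover have "norm2 m (Av M m m w) = (1/t) * norm2 m (Av M m m z)"
    unfolding w_def Av_scale norm2_scale using t by simp
  ultimately show ?thesis using t by (simp add: t_def field_simps)
qed

lemma off_le_iff: assumes "l < n i" shows "(off n i' \<le> off n i + l) = (i' \<le> i)"
  using assms off_mono[of i' i n] off_mono[of "Suc i" i' n] by (cases "i' \<le> i") (auto simp: off_Suc)
lemma off_less_iff: assumes "l < n i" shows "(off n i + l < off n (Suc i')) = (i \<le> i')"
  using assms off_mono[of "Suc i" "Suc i'" n] off_mono[of "Suc i'" i n] by (cases "i \<le> i'") (auto simp: off_Suc)
lemma off_N_le0: "i < q \<Longrightarrow> l < n i \<Longrightarrow> \<not> off n q \<le> off n i + l"
  using off_mono[of "Suc i" q n] by (simp add: off_Suc)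
lemma if_conj_zero: "(if P \<and> Q then x else 0) = (if Q then (if P then x else 0) else 0)"
  by simp
lemma off_N_le: "i < q \<Longrightarrow> l < n i \<Longrightarrow> \<not> off n q + m \<le> off n i + l"
  using off_mono[of "Suc i" q n] by (simp add: off_Suc)
lemma off_N_less: "i' < q \<Longrightarrow> \<not> off n q + m < off n (Suc i')"
  using off_mono[of "Suc i'" q n] by simp
lemma off_le_N: "i' < q \<Longrightarrow> off n i' \<le> off n q + m"
  using off_mono[of i' q n] by simp
lemma nat_antisym_conj: "((a::nat) \<le> b \<and> b \<le> a \<and> P) = (a = b \<and> P)" "((a::nat) \<le> b \<and> b \<le> a) = (a = b)"
  by auto

lemma off_lt_N: "i < q \<Longrightarrow> l < n i \<Longrightarrow> off n i + l < off n q + m"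
  using off_mono[of "Suc i" q n] by (simp add: off_Suc)

lemma e1: "i < q \<Longrightarrow> l < n i \<Longrightarrow> j < q \<Longrightarrow> l' < n j \<Longrightarrow>
  Mtilde q n p A \<rho> (off n i + l) (off n j + l') = \<rho> * (\<Sum>t<p. A i t l * A j t l')"
  by (simp add: Mtilde_def Let_def off_N_le0 off_N_less off_lt_N off_le_iff off_less_iff nat_antisym_conj if_conj_zero cong: sum.cong_simp)
lemma e2: "i < q \<Longrightarrow> l < n i \<Longrightarrow> m < p \<Longrightarrow>
  Mtilde q n p A \<rho> (off n i + l) (off n q + m) = A i m l"
  by (simp add: Mtilde_def Let_def off_N_le0 off_N_less off_lt_N off_le_iff off_less_iff nat_antisym_conj if_conj_zero cong: sum.cong_simp)
lemma e3: "j < q \<Longrightarrow> l' < n j \<Longrightarrow> m < p \<Longrightarrow>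
  Mtilde q n p A \<rho> (off n q + m) (off n j + l') = - A j m l'"
  by (simp add: Mtilde_def Let_def off_N_le0 off_N_less off_lt_N off_le_iff off_less_iff nat_antisym_conj if_conj_zero cong: sum.cong_simp)
lemma e4: "m < p \<Longrightarrow> m' < p \<Longrightarrow>
  Mtilde q n p A \<rho> (off n q + m) (off n q + m') = 0"
  by (simp add: Mtilde_def Let_def off_N_le0 off_N_less off_lt_N off_le_iff off_less_iff nat_antisym_conj if_conj_zero cong: sum.cong_simp)

definition MMx :: "nat \<Rightarrow> (nat \<Rightarrow> nat) \<Rightarrow> nat \<Rightarrow> (nat \<Rightarrow> nat \<Rightarrow> nat \<Rightarrow> real) \<Rightarrow> real
   \<Rightarrow> (nat \<Rightarrow> nat \<Rightarrow> real) \<Rightarrow> nat \<Rightarrow> nat \<Rightarrow> real" where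
  "MMx q n p A \<rho> D i = (\<lambda>l. \<rho> * (\<Sum>j<q. ATv (A i) p (n i) (Av (A j) p (n j) (D j)) l)
      + ATv (A i) p (n i) (D q) l)"
definition flat :: "nat \<Rightarrow> (nat \<Rightarrow> nat) \<Rightarrow> nat \<Rightarrow> (nat \<Rightarrow> nat \<Rightarrow> real) \<Rightarrow> nat \<Rightarrow> real" where
  "flat q n p D r = (\<Sum>i<q. if off n i \<le> r \<and> r < off n (Suc i) then D i (r - off n i) else 0)
     + (if off n q \<le> r \<and> r < off n q + p then D q (r - off n q) else 0)"

lemma flat_blk: "i < q \<Longrightarrow> l < n i \<Longrightarrow> flat q n p D (off n i + l) = D i l"
  by (simp add: flat_def off_N_le0 off_le_iff off_less_iff nat_antisym_conj)
lemma flat_N: "m < p \<Longrightarrow> flat q n p D (off n q + m) = D q m"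
  by (simp add: flat_def off_N_less cong: sum.cong_simp)
lemma flat_Vsp: "flat q n p D \<in> Vsp (off n q + p)"
  unfolding Vsp_def flat_def
proof (intro CollectI allI impI)
  fix r assume r: "off n q + p \<le> r"
  have "(\<Sum>i<q. if off n i \<le> r \<and> r < off n (Suc i) then D i (r - off n i) else 0) = 0"
  proof (intro sum.neutral ballI)
    fix i assume "i \<in> {..<q}"
    then have "off n (Suc i) \<le> off n q" by (intro off_mono) auto
    then show "(if off n i \<le> r \<and> r < off n (Suc i) then D i (r - off n i) else 0) = 0"
      using r by auto
  qed
  then show "(\<Sum>i<q. if off n i \<le> r \<and> r < off n (Suc i) then D i (r - off n i) else 0) +
         (if off n q \<le> r \<and> r < off n q + p then D q (r - off n q) else 0) = 0" using r by simp
qed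

lemma sum_N: "(\<Sum>r<off n q + p. h r) = (\<Sum>i<q. \<Sum>l<n i. h (off n i + l)) + (\<Sum>m<p. h (off n q + m))"
  by (simp add: sum_lessThan_add_split sum_off)

lemma Av_flat_blk: assumes i: "i < q" and l: "l < n i"
  shows "Av (Mtilde q n p A \<rho>) (off n q + p) (off n q + p) (flat q n p D) (off n i + l) = MMx q n p A \<rho> D i l"
proof -
  have r: "off n i + l < off n q + p" using off_lt_N[of i q l n p] i l by simp
  have "Av (Mtilde q n p A \<rho>) (off n q + p) (off n q + p) (flat q n p D) (off n i + l)
     = (\<Sum>j<q. \<Sum>l'<n j. \<rho> * (\<Sum>t<p. A i t l * A j t l') * D j l') + (\<Sum>m<p. A i m l * D q m)"
    unfolding Av_def using r i l by (simp add: sum_N e1 e2 flat_blk flat_N cong: sum.cong_simp)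
  also have "\<dots> = MMx q n p A \<rho> D i l"
    unfolding MMx_def ATv_def Av_def using l
    by (simp add: sum_distrib_left sum_distrib_right mult_ac sum.swap[of _ "{..<p}"] cong: sum.cong_simp)
  finally show ?thesis .
qed

lemma Av_flat_N: assumes m: "m < p"
  shows "Av (Mtilde q n p A \<rho>) (off n q + p) (off n q + p) (flat q n p D) (off n q + m) = - sumAx q n p A D m"
proof -
  have "Av (Mtilde q n p A \<rho>) (off n q + p) (off n q + p) (flat q n p D) (off n q + m)
     = (\<Sum>j<q. \<Sum>l'<n j. - A j m l' * D j l')"
    unfolding Av_def using m by (simp add: sum_N e3 e4 flat_blk flat_N cong: sum.cong_simp)
  also have "\<dots> = - sumAx q n p A D m"
    unfolding sumAx_def Av_def using m by (simp add: sum_negf)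
  finally show ?thesis .
qed

lemma lip_flat: assumes L: "spec_norm (off n q + p) (Mtilde q n p A \<rho>) \<le> L"
  shows "(\<Sum>i<q. \<Sum>l<n i. (MMx q n p A \<rho> D i l)\<^sup>2) + (\<Sum>m<p. (sumAx q n p A D m)\<^sup>2)
     \<le> L\<^sup>2 * ((\<Sum>i<q. \<Sum>l<n i. (D i l)\<^sup>2) + (\<Sum>m<p. (D q m)\<^sup>2))"
proof -
  let ?N = "off n q + p" and ?M = "Mtilde q n p A \<rho>" and ?z = "flat q n p D"
  have 1: "(norm2 ?N (Av ?M ?N ?N ?z))\<^sup>2 = (\<Sum>i<q. \<Sum>l<n i. (MMx q n p A \<rho> D i l)\<^sup>2) + (\<Sum>m<p. (sumAx q n p A D m)\<^sup>2)"
    unfolding norm2_sq sum_N by (simp add: Av_flat_blk Av_flat_N cong: sum.cong_simp)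
  have 2: "(norm2 ?N ?z)\<^sup>2 = (\<Sum>i<q. \<Sum>l<n i. (D i l)\<^sup>2) + (\<Sum>m<p. (D q m)\<^sup>2)"
    unfolding norm2_sq sum_N by (simp add: flat_blk flat_N cong: sum.cong_simp)
  have "norm2 ?N (Av ?M ?N ?N ?z) \<le> spec_norm ?N ?M * norm2 ?N ?z" by (rule spec_bound[OF flat_Vsp])
  also have "\<dots> \<le> L * norm2 ?N ?z" by (rule mult_right_mono[OF L norm2_nonneg])
  finally have "(norm2 ?N (Av ?M ?N ?N ?z))\<^sup>2 \<le> (L * norm2 ?N ?z)\<^sup>2"
    by (intro power_mono norm2_nonneg)
  then show ?thesis unfolding 1 power_mult_distrib 2 .
qed


lemma sq_expand: fixes t :: real shows "(\<Sum>j<m. (t * (u j - xp j) + (xp j - xh j))\<^sup>2)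
   = (\<Sum>j<m. (xp j - xh j)\<^sup>2) + 2 * t * (\<Sum>j<m. (xp j - xh j) * (u j - xp j)) + t\<^sup>2 * (\<Sum>j<m. (u j - xp j)\<^sup>2)"
proof -
  have "(\<Sum>j<m. (t * (u j - xp j) + (xp j - xh j))\<^sup>2) = (\<Sum>j<m. (xp j - xh j)\<^sup>2 + 2 * t * ((xp j - xh j) * (u j - xp j)) + t\<^sup>2 * (u j - xp j)\<^sup>2)"
    by (intro sum.cong) (auto simp: power2_eq_square algebra_simps)
  also have "\<dots> = (\<Sum>j<m. (xp j - xh j)\<^sup>2) + 2 * t * (\<Sum>j<m. (xp j - xh j) * (u j - xp j)) + t\<^sup>2 * (\<Sum>j<m. (u j - xp j)\<^sup>2)"
    by (simp add: sum.distrib sum_distrib_left)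
  finally show ?thesis .
qed

lemma small_t: fixes X C :: real
  assumes C: "0 \<le> C" and h: "\<And>t. 0 < t \<Longrightarrow> t \<le> 1 \<Longrightarrow> 0 \<le> X + t * C"
  shows "0 \<le> X"
proof (rule ccontr)
  assume X: "\<not> 0 \<le> X"
  define t where "t = min 1 (- X / (C + 1))"
  have "X / (C + 1) < 0" using X C by (intro divide_neg_pos) auto
  then have t0: "0 < t" by (simp add: t_def)
  have t1: "t \<le> 1" by (simp add: t_def)
  have "t \<le> - X / (C + 1)" by (simp add: t_def)
  then have "t * (C + 1) \<le> - X" using C by (simp add: field_simps)
  then have "t * C < - X" using t0 by (simp add: algebra_simps)
  with h[OF t0 t1] show False by simp
qed

lemma prox_vi:
  fixes g :: "(nat \<Rightarrow> real) \<Rightarrow> ereal" and xh xp :: "nat \<Rightarrow> real"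
  assumes eta: "0 < \<eta>" and pr: "proper_fn m g" and cv: "convex_fn m g" and xp: "xp \<in> Vsp m"
    and opt: "\<forall>u\<in>Vsp m. ereal \<eta> * g xp + ereal ((norm2 m (\<lambda>l. xp l - xh l))\<^sup>2 / 2)
              \<le> ereal \<eta> * g u + ereal ((norm2 m (\<lambda>l. u l - xh l))\<^sup>2 / 2)"
  shows "g xp \<noteq> \<infinity> \<and> g xp \<noteq> -\<infinity> \<and> (\<forall>u\<in>Vsp m. g u \<noteq> \<infinity> \<longrightarrow>
     \<eta> * real_of_ereal (g xp) + inner_n m (\<lambda>l. xh l - xp l) (\<lambda>l. u l - xp l) \<le> \<eta> * real_of_ereal (g u))"
proof -
  from pr obtain u0 where u0: "u0 \<in> Vsp m" "g u0 \<noteq> \<infinity>" unfolding proper_fn_def by auto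
  have nm: "g v \<noteq> -\<infinity>" if "v \<in> Vsp m" for v using pr that unfolding proper_fn_def by auto
  have fin: "g xp \<noteq> \<infinity>"
  proof
    assume inf: "g xp = \<infinity>"
    have E1: "ereal \<eta> * g xp + ereal ((norm2 m (\<lambda>l. xp l - xh l))\<^sup>2 / 2) = \<infinity>" using inf eta by simp
    have E2: "ereal \<eta> * g u0 + ereal ((norm2 m (\<lambda>l. u0 l - xh l))\<^sup>2 / 2) \<noteq> \<infinity>"
      using u0 nm[OF u0(1)] by (cases "g u0") auto
    have E3: "ereal \<eta> * g xp + ereal ((norm2 m (\<lambda>l. xp l - xh l))\<^sup>2 / 2) \<le> ereal \<eta> * g u0 + ereal ((norm2 m (\<lambda>l. u0 l - xh l))\<^sup>2 / 2)"
      using opt u0(1) by blast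
    have "\<infinity> \<le> ereal \<eta> * g u0 + ereal ((norm2 m (\<lambda>l. u0 l - xh l))\<^sup>2 / 2)"
      using E3 unfolding E1 .
    with E2 show False by (simp only: ereal_infty_less_eq(1))
  qed
  have main: "\<eta> * real_of_ereal (g xp) + inner_n m (\<lambda>l. xh l - xp l) (\<lambda>l. u l - xp l) \<le> \<eta> * real_of_ereal (g u)"
    if u: "u \<in> Vsp m" "g u \<noteq> \<infinity>" for u
  proof -
    define a where "a = real_of_ereal (g xp)"
    define b where "b = real_of_ereal (g u)"
    have ga: "g xp = ereal a" using fin nm[OF xp] by (cases "g xp") (auto simp: a_def)
    have gb: "g u = ereal b" using u nm[OF u(1)] by (cases "g u") (auto simp: b_def)
    define P where "P = (\<Sum>j<m. (xp j - xh j) * (u j - xp j))"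
    define N0 where "N0 = (\<Sum>j<m. (xp j - xh j)\<^sup>2)"
    define Nd where "Nd = (\<Sum>j<m. (u j - xp j)\<^sup>2)"
    have Nd0: "0 \<le> Nd" unfolding Nd_def by (intro sum_nonneg) simp
    have key: "0 \<le> (\<eta> * (b - a) + P) + t * (Nd / 2)" if t: "0 < t" "t \<le> 1" for t
    proof -
      define w where "w = (\<lambda>j. t * u j + (1 - t) * xp j)"
      have w: "w \<in> Vsp m" using u(1) xp by (auto simp: Vsp_def w_def)
      have "g w \<le> ereal (t * b + (1 - t) * a)"
        using cv[unfolded convex_fn_def, rule_format, of u xp b a t] u(1) xp t unfolding w_def by (simp add: ga gb)
      then have B0: "ereal \<eta> * g w \<le> ereal (\<eta> * (t * b + (1 - t) * a))"
        using eta ereal_mult_left_mono[of "g w" "ereal (t * b + (1 - t) * a)" "ereal \<eta>"] by simp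
      have A0: "ereal \<eta> * g xp + ereal ((norm2 m (\<lambda>l. xp l - xh l))\<^sup>2 / 2)
          \<le> ereal \<eta> * g w + ereal ((norm2 m (\<lambda>l. w l - xh l))\<^sup>2 / 2)"
        using opt w by blast
      have "ereal \<eta> * g xp + ereal ((norm2 m (\<lambda>l. xp l - xh l))\<^sup>2 / 2)
          \<le> ereal (\<eta> * (t * b + (1 - t) * a)) + ereal ((norm2 m (\<lambda>l. w l - xh l))\<^sup>2 / 2)"
        by (rule order_trans[OF A0 add_right_mono[OF B0]])
      moreover have wsq: "(norm2 m (\<lambda>l. w l - xh l))\<^sup>2 = (\<Sum>j<m. (t * (u j - xp j) + (xp j - xh j))\<^sup>2)"
        unfolding norm2_sq w_def by (intro sum.cong refl) (simp add: algebra_simps)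
      moreover have "(norm2 m (\<lambda>l. xp l - xh l))\<^sup>2 = N0" unfolding norm2_sq N0_def ..
      ultimately have "\<eta> * a + N0 / 2 \<le> \<eta> * (t * b + (1 - t) * a) + (\<Sum>j<m. (t * (u j - xp j) + (xp j - xh j))\<^sup>2) / 2"
        unfolding ga by simp
      then have "\<eta> * a + N0 / 2 \<le> \<eta> * (t * b + (1 - t) * a) + (N0 + 2 * t * P + t\<^sup>2 * Nd) / 2"
        unfolding sq_expand N0_def P_def Nd_def .
      then have "0 \<le> t * ((\<eta> * (b - a) + P) + t * (Nd / 2))"
        by (simp add: algebra_simps power2_eq_square add_divide_distrib)
      then show ?thesis using t by (simp add: zero_le_mult_iff)
    qed
    have "0 \<le> \<eta> * (b - a) + P" by (rule small_t[of "Nd/2"]) (use Nd0 key in auto)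
    moreover have "inner_n m (\<lambda>l. xh l - xp l) (\<lambda>l. u l - xp l) = - P"
      unfolding inner_n_def P_def by (simp add: sum_negf[symmetric] algebra_simps)
    ultimately show ?thesis by (simp add: a_def b_def algebra_simps)
  qed
  show ?thesis using fin nm[OF xp] main by auto
qed


definition dif :: "(nat \<Rightarrow> nat \<Rightarrow> real) \<Rightarrow> (nat \<Rightarrow> nat \<Rightarrow> real) \<Rightarrow> nat \<Rightarrow> nat \<Rightarrow> real" where
  "dif U V = (\<lambda>i l. U i l - V i l)"

lemma adjoint: "(\<Sum>l<nn. ATv B pp nn v l * w l) = (\<Sum>t<pp. v t * Av B pp nn w t)"
  unfolding ATv_def Av_def
  by (simp add: sum_distrib_left sum_distrib_right mult_ac sum.swap[of _ "{..<pp}"] cong: sum.cong_simp)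

lemma Av_dif: "Av B pp nn (\<lambda>l. u l - v l) t = Av B pp nn u t - Av B pp nn v t"
  unfolding Av_def by (simp add: sum_subtractf right_diff_distrib)
lemma ATv_dif: "ATv B pp nn (\<lambda>l. u l - v l) t = ATv B pp nn u t - ATv B pp nn v t"
  unfolding ATv_def by (simp add: sum_subtractf right_diff_distrib)
lemma sumAx_dif: "sumAx q n p A (dif U V) t = sumAx q n p A U t - sumAx q n p A V t"
  unfolding sumAx_def dif_def by (simp add: Av_dif sum_subtractf)
lemma ATv_sub: "ATv B pp nn (\<lambda>l. u l - v l) = (\<lambda>t. ATv B pp nn u t - ATv B pp nn v t)"
  using ATv_dif by blast
lemma MMx_dif: "MMx q n p A \<rho> (dif U V) i l = MMx q n p A \<rho> U i l - MMx q n p A \<rho> V i l"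
proof -
  have "Av (A j) p (n j) (dif U V j) = (\<lambda>t. Av (A j) p (n j) (U j) t - Av (A j) p (n j) (V j) t)" for j
    unfolding dif_def using Av_dif by blast
  then show ?thesis unfolding MMx_def
    by (simp add: ATv_sub dif_def sum_subtractf algebra_simps)
qed

locale frb =
  fixes q p :: nat and n :: "nat \<Rightarrow> nat"
    and f :: "nat \<Rightarrow> (nat \<Rightarrow> real) \<Rightarrow> ereal"
    and A :: "nat \<Rightarrow> nat \<Rightarrow> nat \<Rightarrow> real"
    and c :: "nat \<Rightarrow> real"
    and \<rho> Lt \<eta> :: real
    and x :: "nat \<Rightarrow> int \<Rightarrow> nat \<Rightarrow> real"
    and y :: "int \<Rightarrow> nat \<Rightarrow> real"
  assumes f_prop: "\<And>i. i < q \<Longrightarrow> proper_fn (n i) (f i) \<and> closed_fn (n i) (f i) \<and> convex_fn (n i) (f i)"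
    and c_in: "c \<in> Vsp p"
    and saddle: "has_saddle_point q n p f A c"
    and rho: "0 \<le> \<rho>"
    and Lt_pos: "0 < Lt" and Lt_bd: "spec_norm (off n q + p) (Mtilde q n p A \<rho>) \<le> Lt"
    and eta_pos: "0 < \<eta>" and eta_bd: "\<eta> < 1 / (2 * Lt)"
    and init_x: "\<And>i. i < q \<Longrightarrow> x i (-1) \<in> Vsp (n i) \<and> x i 0 \<in> Vsp (n i)"
    and init_y: "y (-1) \<in> Vsp p" "y 0 \<in> Vsp p"
    and x_step: "\<And>i k. i < q \<Longrightarrow>
       (let xhat = (\<lambda>l. x i (int k) l
              - 2 * \<eta> * ATv (A i) p (n i) (y (int k)) l
              - 2 * \<eta> * \<rho> * (\<Sum>j<q. ATv (A i) p (n i) (Av (A j) p (n j) (x j (int k))) l)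
              + \<eta> * ATv (A i) p (n i) (y (int k - 1)) l
              + \<eta> * \<rho> * (\<Sum>j<q. ATv (A i) p (n i) (Av (A j) p (n j) (x j (int k - 1))) l)
              + \<eta> * \<rho> * ATv (A i) p (n i) c l)
        in x i (int k + 1) \<in> Vsp (n i) \<and>
           (\<forall>u\<in>Vsp (n i).
              ereal \<eta> * f i (x i (int k + 1)) + ereal ((norm2 (n i) (\<lambda>l. x i (int k + 1) l - xhat l))\<^sup>2 / 2)
              \<le> ereal \<eta> * f i u + ereal ((norm2 (n i) (\<lambda>l. u l - xhat l))\<^sup>2 / 2)))"
    and y_step: "\<And>k. y (int k + 1) = (\<lambda>r. y (int k) r
              + 2 * \<eta> * sumAx q n p A (\<lambda>i. x i (int k)) r
              - \<eta> * sumAx q n p A (\<lambda>i. x i (int k - 1)) r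
              - \<eta> * c r)"
begin

definition d where "d i = (if i < q then n i else p)"
definition ip :: "(nat \<Rightarrow> nat \<Rightarrow> real) \<Rightarrow> (nat \<Rightarrow> nat \<Rightarrow> real) \<Rightarrow> real" where "ip U V = (\<Sum>i<Suc q. \<Sum>l<d i. U i l * V i l)"
definition FF where "FF U i l = (if i < q then MMx q n p A \<rho> U i l - \<rho> * ATv (A i) p (n i) c l
    else c l - sumAx q n p A U l)"
definition Z where "Z k i = (if i < q then x i (int k - 1) else y (int k - 1))"

lemma ip_sym: "ip U V = ip V U" unfolding ip_def by (simp add: mult.commute)
lemma ip_dif_left: "ip (dif U V) W = ip U W - ip V W"
  unfolding ip_def dif_def by (simp add: left_diff_distrib sum_subtractf)
lemma ip_dif_right: "ip W (dif U V) = ip W U - ip W V"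
  unfolding ip_def dif_def by (simp add: right_diff_distrib sum_subtractf)
lemma nn_nonneg: "0 \<le> ip U U"
  unfolding ip_def by (intro sum_nonneg) auto
lemma nn_coord: assumes "i < Suc q" "l < d i" shows "(U i l)\<^sup>2 \<le> ip U U"
proof -
  have "(U i l)\<^sup>2 = U i l * U i l" by (simp add: power2_eq_square)
  also have "\<dots> \<le> (\<Sum>l<d i. U i l * U i l)" using assms by (intro member_le_sum) auto
  also have "\<dots> \<le> ip U U" unfolding ip_def using assms
    by (intro member_le_sum[of i "{..<Suc q}" "\<lambda>i. \<Sum>l<d i. U i l * U i l"] sum_nonneg) auto
  finally show ?thesis .
qed
lemma ip_cong: "(\<And>i l. i < Suc q \<Longrightarrow> l < d i \<Longrightarrow> U i l = U' i l) \<Longrightarrow> ip U V = ip U' V"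
  unfolding ip_def by (intro sum.cong refl) auto

lemma FF_dif_blk: "i < q \<Longrightarrow> dif (FF U) (FF V) i l = MMx q n p A \<rho> (dif U V) i l"
  using MMx_dif[of q n p A \<rho> U V i l] by (simp add: FF_def dif_def[of "FF U" "FF V"])
lemma FF_dif_q: "dif (FF U) (FF V) q l = - sumAx q n p A (dif U V) l"
  using sumAx_dif[of q n p A U V l] by (simp add: FF_def dif_def[of "FF U" "FF V"])

lemma ip_split: "ip U V = (\<Sum>i<q. \<Sum>l<n i. U i l * V i l) + (\<Sum>l<p. U q l * V q l)"
  unfolding ip_def by (simp add: d_def)

lemma lip: "ip (dif (FF U) (FF V)) (dif (FF U) (FF V)) \<le> Lt\<^sup>2 * ip (dif U V) (dif U V)"
proof -
  let ?D = "dif U V"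
  have "ip (dif (FF U) (FF V)) (dif (FF U) (FF V)) =
     (\<Sum>i<q. \<Sum>l<n i. (MMx q n p A \<rho> ?D i l)\<^sup>2) + (\<Sum>m<p. (sumAx q n p A ?D m)\<^sup>2)"
    unfolding ip_split by (simp add: FF_dif_blk FF_dif_q power2_eq_square cong: sum.cong_simp)
  also have "\<dots> \<le> Lt\<^sup>2 * ((\<Sum>i<q. \<Sum>l<n i. (?D i l)\<^sup>2) + (\<Sum>m<p. (?D q m)\<^sup>2))"
    by (rule lip_flat[OF Lt_bd])
  also have "\<dots> = Lt\<^sup>2 * ip ?D ?D"
    unfolding ip_split by (simp add: power2_eq_square)
  finally show ?thesis .
qed

lemma mono: "0 \<le> ip (dif (FF U) (FF V)) (dif U V)"
proof -
  let ?D = "dif U V"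
  define S where "S = sumAx q n p A ?D"
  define av where "av i t = Av (A i) p (n i) (?D i) t" for i t
  have S: "S t = (\<Sum>j<q. av j t)" for t unfolding S_def sumAx_def av_def ..
  have blk: "(\<Sum>l<n i. MMx q n p A \<rho> ?D i l * ?D i l) =
     \<rho> * (\<Sum>t<p. S t * av i t) + (\<Sum>t<p. ?D q t * av i t)" for i
  proof -
    have "(\<Sum>l<n i. MMx q n p A \<rho> ?D i l * ?D i l) =
       \<rho> * (\<Sum>l<n i. \<Sum>j<q. ATv (A i) p (n i) (Av (A j) p (n j) (?D j)) l * ?D i l)
       + (\<Sum>l<n i. ATv (A i) p (n i) (?D q) l * ?D i l)"
      unfolding MMx_def by (simp add: distrib_right sum.distrib sum_distrib_left sum_distrib_right mult.assoc)
    also have "(\<Sum>l<n i. \<Sum>j<q. ATv (A i) p (n i) (Av (A j) p (n j) (?D j)) l * ?D i l)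
       = (\<Sum>j<q. \<Sum>l<n i. ATv (A i) p (n i) (Av (A j) p (n j) (?D j)) l * ?D i l)"
      by (rule sum.swap)
    also have "\<dots> = (\<Sum>j<q. \<Sum>t<p. av j t * av i t)"
      unfolding av_def by (simp only: adjoint)
    also have "\<dots> = (\<Sum>t<p. \<Sum>j<q. av j t * av i t)" by (rule sum.swap)
    also have "\<dots> = (\<Sum>t<p. S t * av i t)" unfolding S by (simp add: sum_distrib_right)
    also have "(\<Sum>l<n i. ATv (A i) p (n i) (?D q) l * ?D i l) = (\<Sum>t<p. ?D q t * av i t)"
      unfolding av_def by (simp only: adjoint)
    finally show ?thesis .
  qed
  have sw: "(\<Sum>i<q. \<Sum>t<p. g t * av i t) = (\<Sum>t<p. g t * S t)" for g :: "nat \<Rightarrow> real"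
  proof -
    have "(\<Sum>i<q. \<Sum>t<p. g t * av i t) = (\<Sum>t<p. \<Sum>i<q. g t * av i t)" by (rule sum.swap)
    also have "\<dots> = (\<Sum>t<p. g t * S t)" unfolding S by (simp add: sum_distrib_left)
    finally show ?thesis .
  qed
  have "ip (dif (FF U) (FF V)) ?D = (\<Sum>i<q. \<Sum>l<n i. MMx q n p A \<rho> ?D i l * ?D i l) + (\<Sum>m<p. - S m * ?D q m)"
    unfolding ip_split S_def by (simp add: FF_dif_blk FF_dif_q cong: sum.cong_simp)
  also have "\<dots> = \<rho> * (\<Sum>t<p. S t * S t) + (\<Sum>t<p. ?D q t * S t) + (\<Sum>m<p. - S m * ?D q m)"
    unfolding blk sum.distrib sum_distrib_left[symmetric] sw ..
  also have "\<dots> = \<rho> * (\<Sum>t<p. S t * S t)"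
    by (simp add: sum_negf mult.commute)
  also have "\<dots> \<ge> 0" by (intro mult_nonneg_nonneg[OF rho] sum_nonneg) simp
  finally show ?thesis .
qed

end

context frb begin

definition W where "W k i l = Z (Suc k) i l - \<eta> * (2 * FF (Z (Suc k)) i l - FF (Z k) i l)"

lemma Z_blk: "i < q \<Longrightarrow> Z k i = x i (int k - 1)" by (simp add: Z_def)
lemma Z_q: "Z k q = y (int k - 1)" by (simp add: Z_def)

lemma sumAx_cong: "(\<And>i. i < q \<Longrightarrow> U i = V i) \<Longrightarrow> sumAx q n p A U = sumAx q n p A V"
  unfolding sumAx_def by (intro ext sum.cong) auto

lemma W_blk: assumes i: "i < q"
  shows "(\<lambda>l. x i (int k) l
              - 2 * \<eta> * ATv (A i) p (n i) (y (int k)) l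
              - 2 * \<eta> * \<rho> * (\<Sum>j<q. ATv (A i) p (n i) (Av (A j) p (n j) (x j (int k))) l)
              + \<eta> * ATv (A i) p (n i) (y (int k - 1)) l
              + \<eta> * \<rho> * (\<Sum>j<q. ATv (A i) p (n i) (Av (A j) p (n j) (x j (int k - 1))) l)
              + \<eta> * \<rho> * ATv (A i) p (n i) c l) = W k i"
proof -
  have s1: "(\<Sum>j<q. ATv (A i) p (n i) (Av (A j) p (n j) (Z (Suc k) j)) l) = (\<Sum>j<q. ATv (A i) p (n i) (Av (A j) p (n j) (x j (int k))) l)" for l
    by (intro sum.cong) (auto simp: Z_blk)
  have s2: "(\<Sum>j<q. ATv (A i) p (n i) (Av (A j) p (n j) (Z k j)) l) = (\<Sum>j<q. ATv (A i) p (n i) (Av (A j) p (n j) (x j (int k - 1))) l)" for l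
    by (intro sum.cong) (auto simp: Z_blk)
  show ?thesis
    unfolding W_def FF_def MMx_def using i
    by (intro ext) (simp add: s1 s2 Z_blk Z_q algebra_simps)
qed

lemma W_q: "W k q = Z (Suc (Suc k)) q"
proof -
  have "sumAx q n p A (Z (Suc k)) = sumAx q n p A (\<lambda>i. x i (int k))"
    by (rule sumAx_cong) (simp add: Z_blk)
  moreover have "sumAx q n p A (Z k) = sumAx q n p A (\<lambda>i. x i (int k - 1))"
    by (rule sumAx_cong) (simp add: Z_blk)
  moreover have "Z (Suc (Suc k)) q = y (int k + 1)" by (simp add: Z_q add.commute)
  then have "Z (Suc (Suc k)) q = (\<lambda>r. y (int k) r
              + 2 * \<eta> * sumAx q n p A (\<lambda>i. x i (int k)) r
              - \<eta> * sumAx q n p A (\<lambda>i. x i (int k - 1)) r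
              - \<eta> * c r)" using y_step[of k] by simp
  ultimately show ?thesis
    unfolding W_def FF_def by (intro ext) (simp add: Z_q algebra_simps)
qed

lemma vi: assumes i: "i < q"
  shows "Z (Suc (Suc k)) i \<in> Vsp (n i) \<and> f i (Z (Suc (Suc k)) i) \<noteq> \<infinity> \<and> f i (Z (Suc (Suc k)) i) \<noteq> -\<infinity> \<and>
    (\<forall>u\<in>Vsp (n i). f i u \<noteq> \<infinity> \<longrightarrow> \<eta> * real_of_ereal (f i (Z (Suc (Suc k)) i))
        + inner_n (n i) (\<lambda>l. W k i l - Z (Suc (Suc k)) i l) (\<lambda>l. u l - Z (Suc (Suc k)) i l)
       \<le> \<eta> * real_of_ereal (f i u))"
proof -
  have zz: "Z (Suc (Suc k)) i = x i (int k + 1)" using i by (simp add: Z_blk add.commute)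
  have xs: "x i (int k + 1) \<in> Vsp (n i) \<and>
           (\<forall>u\<in>Vsp (n i).
              ereal \<eta> * f i (x i (int k + 1)) + ereal ((norm2 (n i) (\<lambda>l. x i (int k + 1) l - W k i l))\<^sup>2 / 2)
              \<le> ereal \<eta> * f i u + ereal ((norm2 (n i) (\<lambda>l. u l - W k i l))\<^sup>2 / 2))"
    using x_step[OF i, of k] unfolding Let_def W_blk[OF i] .
  have "f i (x i (int k + 1)) \<noteq> \<infinity> \<and> f i (x i (int k + 1)) \<noteq> -\<infinity> \<and> (\<forall>u\<in>Vsp (n i). f i u \<noteq> \<infinity> \<longrightarrow>
     \<eta> * real_of_ereal (f i (x i (int k + 1))) + inner_n (n i) (\<lambda>l. W k i l - x i (int k + 1) l) (\<lambda>l. u l - x i (int k + 1) l) \<le> \<eta> * real_of_ereal (f i u))"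
    using f_prop[OF i] xs by (intro prox_vi eta_pos) auto
  then show ?thesis using xs unfolding zz by blast
qed

end

context frb begin

definition tot :: "(nat \<Rightarrow> nat \<Rightarrow> real) \<Rightarrow> real" where
  "tot P = (\<Sum>i<Suc q. \<Sum>l<d i. P i l)"

lemma tot_add: "tot (\<lambda>i l. P i l + Q i l) = tot P + tot Q"
  unfolding tot_def by (simp add: sum.distrib)
lemma tot_diff: "tot (\<lambda>i l. P i l - Q i l) = tot P - tot Q"
  unfolding tot_def by (simp add: sum_subtractf)
lemma tot_scale: "tot (\<lambda>i l. a * P i l) = a * tot P"
  unfolding tot_def by (simp only: sum_distrib_left)
lemma tot_cong: "(\<And>i l. i < Suc q \<Longrightarrow> l < d i \<Longrightarrow> P i l = Q i l) \<Longrightarrow> tot P = tot Q"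
  unfolding tot_def by (intro sum.cong refl) auto
lemma tot_nonneg: "(\<And>i l. i < Suc q \<Longrightarrow> l < d i \<Longrightarrow> 0 \<le> P i l) \<Longrightarrow> 0 \<le> tot P"
  unfolding tot_def by (intro sum_nonneg) auto
lemma tot_split: "tot P = (\<Sum>i<q. \<Sum>l<n i. P i l) + (\<Sum>l<p. P q l)"
  unfolding tot_def by (simp add: d_def)
lemma ip_tot: "ip U V = tot (\<lambda>i l. U i l * V i l)"
  unfolding ip_def tot_def ..
lemma tot_coord: "i < Suc q \<Longrightarrow> l < d i \<Longrightarrow> (P i l)\<^sup>2 \<le> tot (\<lambda>i l. (P i l)\<^sup>2)"
  using nn_coord[of i l P] unfolding ip_tot power2_eq_square .

definition sol where
  "sol s \<longleftrightarrow> (\<forall>i<q. s i \<in> Vsp (n i) \<and> f i (s i) \<noteq> \<infinity> \<and> f i (s i) \<noteq> -\<infinity> \<and>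
      (\<forall>u\<in>Vsp (n i). f i u \<noteq> \<infinity> \<longrightarrow>
          real_of_ereal (f i (s i)) \<le> real_of_ereal (f i u) + inner_n (n i) (FF s i) (\<lambda>l. u l - s i l)))
    \<and> (\<forall>r<p. FF s q r = 0)"

lemma vi_sum: assumes s: "sol s"
  shows "tot (\<lambda>i l. (W k i l - Z (Suc (Suc k)) i l) * (s i l - Z (Suc (Suc k)) i l)
       - \<eta> * FF s i l * (Z (Suc (Suc k)) i l - s i l)) \<le> 0"
proof -
  let ?a = "Z (Suc (Suc k))"
  have blk: "(\<Sum>l<n i. (W k i l - ?a i l) * (s i l - ?a i l) - \<eta> * FF s i l * (?a i l - s i l)) \<le> 0"
    if i: "i < q" for i
  proof -
    have v: "?a i \<in> Vsp (n i)" "f i (?a i) \<noteq> \<infinity>"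
      and vv: "\<forall>u\<in>Vsp (n i). f i u \<noteq> \<infinity> \<longrightarrow> \<eta> * real_of_ereal (f i (?a i))
        + inner_n (n i) (\<lambda>l. W k i l - ?a i l) (\<lambda>l. u l - ?a i l) \<le> \<eta> * real_of_ereal (f i u)"
      using vi[OF i, of k] by auto
    have ss: "s i \<in> Vsp (n i)" "f i (s i) \<noteq> \<infinity>"
      and sv: "\<forall>u\<in>Vsp (n i). f i u \<noteq> \<infinity> \<longrightarrow>
          real_of_ereal (f i (s i)) \<le> real_of_ereal (f i u) + inner_n (n i) (FF s i) (\<lambda>l. u l - s i l)"
      using s i unfolding sol_def by auto
    have 1: "\<eta> * real_of_ereal (f i (?a i)) + inner_n (n i) (\<lambda>l. W k i l - ?a i l) (\<lambda>l. s i l - ?a i l)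
        \<le> \<eta> * real_of_ereal (f i (s i))" using vv ss by auto
    have 2: "real_of_ereal (f i (s i)) \<le> real_of_ereal (f i (?a i)) + inner_n (n i) (FF s i) (\<lambda>l. ?a i l - s i l)"
      using sv v by auto
    have 3: "\<eta> * real_of_ereal (f i (s i)) \<le> \<eta> * (real_of_ereal (f i (?a i)) + inner_n (n i) (FF s i) (\<lambda>l. ?a i l - s i l))"
      using mult_left_mono[OF 2] eta_pos by simp
    have "(\<Sum>l<n i. (W k i l - ?a i l) * (s i l - ?a i l) - \<eta> * FF s i l * (?a i l - s i l))
       = inner_n (n i) (\<lambda>l. W k i l - ?a i l) (\<lambda>l. s i l - ?a i l) - \<eta> * inner_n (n i) (FF s i) (\<lambda>l. ?a i l - s i l)"
      unfolding inner_n_def by (simp add: sum_subtractf sum_distrib_left mult.assoc)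
    also have "\<dots> \<le> 0" using 1 3 by (simp add: algebra_simps)
    finally show ?thesis .
  qed
  have q0: "(\<Sum>l<p. (W k q l - ?a q l) * (s q l - ?a q l) - \<eta> * FF s q l * (?a q l - s q l)) = 0"
    using s unfolding sol_def W_q by simp
  have "(\<Sum>i<q. \<Sum>l<n i. (W k i l - ?a i l) * (s i l - ?a i l) - \<eta> * FF s i l * (?a i l - s i l)) \<le> 0"
    by (rule sum_nonpos) (simp add: blk)
  then show ?thesis unfolding tot_split q0 by simp
qed

lemma mono_tot: "0 \<le> tot (\<lambda>i l. (FF U i l - FF V i l) * (U i l - V i l))"
  using mono[of U V] unfolding ip_tot dif_def .

lemma amgm_lip: "0 \<le> tot (\<lambda>i l. Lt * (T i l)\<^sup>2 + 2 * (FF b i l - FF e i l) * T i l + Lt * (b i l - e i l)\<^sup>2)"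
proof -
  have L: "tot (\<lambda>i l. (FF b i l - FF e i l)\<^sup>2) \<le> Lt\<^sup>2 * tot (\<lambda>i l. (b i l - e i l)\<^sup>2)"
    using lip[of b e] unfolding ip_tot dif_def power2_eq_square .
  have "Lt * tot (\<lambda>i l. Lt * (T i l)\<^sup>2 + 2 * (FF b i l - FF e i l) * T i l + Lt * (b i l - e i l)\<^sup>2)
     = tot (\<lambda>i l. (FF b i l - FF e i l + Lt * T i l)\<^sup>2 - (FF b i l - FF e i l)\<^sup>2 + Lt\<^sup>2 * (b i l - e i l)\<^sup>2)"
    unfolding tot_scale[symmetric] by (intro tot_cong) (simp add: power2_eq_square algebra_simps)
  also have "\<dots> = tot (\<lambda>i l. (FF b i l - FF e i l + Lt * T i l)\<^sup>2) - tot (\<lambda>i l. (FF b i l - FF e i l)\<^sup>2)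
      + Lt\<^sup>2 * tot (\<lambda>i l. (b i l - e i l)\<^sup>2)"
    by (simp only: tot_add tot_diff tot_scale)
  also have "\<dots> \<ge> 0" using L tot_nonneg[of "\<lambda>i l. (FF b i l - FF e i l + Lt * T i l)\<^sup>2"] by simp
  finally show ?thesis using Lt_pos by (simp add: zero_le_mult_iff)
qed

definition Phi where
  "Phi s k = tot (\<lambda>i l. (Z (Suc k) i l - s i l)\<^sup>2
     - 2 * \<eta> * (FF (Z (Suc k)) i l - FF (Z k) i l) * (Z (Suc k) i l - s i l)
     + \<eta> * Lt * (Z (Suc k) i l - Z k i l)\<^sup>2)"

lemma fejer: assumes s: "sol s"
  shows "Phi s (Suc k) + (1 - 2 * \<eta> * Lt) * tot (\<lambda>i l. (Z (Suc (Suc k)) i l - Z (Suc k) i l)\<^sup>2) \<le> Phi s k"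
proof -
  let ?a = "Z (Suc (Suc k))" and ?b = "Z (Suc k)" and ?e = "Z k"
  define E1 where "E1 = tot (\<lambda>i l. (W k i l - ?a i l) * (s i l - ?a i l) - \<eta> * FF s i l * (?a i l - s i l))"
  define E2 where "E2 = tot (\<lambda>i l. (FF ?a i l - FF s i l) * (?a i l - s i l))"
  define E5 where "E5 = tot (\<lambda>i l. Lt * (?a i l - ?b i l)\<^sup>2 + 2 * (FF ?b i l - FF ?e i l) * (?a i l - ?b i l) + Lt * (?b i l - ?e i l)\<^sup>2)"
  have h1: "E1 \<le> 0" unfolding E1_def by (rule vi_sum[OF s])
  have h2: "0 \<le> E2" unfolding E2_def by (rule mono_tot)
  have h5: "0 \<le> E5" unfolding E5_def by (rule amgm_lip)
  have "Phi s k - Phi s (Suc k) - (1 - 2 * \<eta> * Lt) * tot (\<lambda>i l. (?a i l - ?b i l)\<^sup>2)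
     = tot (\<lambda>i l. ((?b i l - s i l)\<^sup>2 - 2 * \<eta> * (FF ?b i l - FF ?e i l) * (?b i l - s i l) + \<eta> * Lt * (?b i l - ?e i l)\<^sup>2)
          - ((?a i l - s i l)\<^sup>2 - 2 * \<eta> * (FF ?a i l - FF ?b i l) * (?a i l - s i l) + \<eta> * Lt * (?a i l - ?b i l)\<^sup>2)
          - (1 - 2 * \<eta> * Lt) * (?a i l - ?b i l)\<^sup>2)"
    unfolding Phi_def by (simp only: tot_diff tot_scale)
  also have "\<dots> = tot (\<lambda>i l. (-2) * ((W k i l - ?a i l) * (s i l - ?a i l) - \<eta> * FF s i l * (?a i l - s i l))
      + (2 * \<eta>) * ((FF ?a i l - FF s i l) * (?a i l - s i l))
      + \<eta> * (Lt * (?a i l - ?b i l)\<^sup>2 + 2 * (FF ?b i l - FF ?e i l) * (?a i l - ?b i l) + Lt * (?b i l - ?e i l)\<^sup>2))"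
    by (intro tot_cong) (simp add: W_def power2_eq_square algebra_simps)
  also have "\<dots> = (-2) * E1 + (2 * \<eta>) * E2 + \<eta> * E5"
    unfolding E1_def E2_def E5_def by (simp only: tot_add tot_scale)
  also have "\<dots> \<ge> 0"
  proof -
    have "0 \<le> (2 * \<eta>) * E2" "0 \<le> \<eta> * E5" using h2 h5 eta_pos by auto
    then show ?thesis using h1 by linarith
  qed
  finally show ?thesis by simp
qed

lemma Phi_lower: "(1 - \<eta> * Lt) * tot (\<lambda>i l. (Z (Suc k) i l - s i l)\<^sup>2) \<le> Phi s k"
proof -
  let ?b = "Z (Suc k)" and ?e = "Z k"
  have h5: "0 \<le> tot (\<lambda>i l. Lt * (s i l - ?b i l)\<^sup>2 + 2 * (FF ?b i l - FF ?e i l) * (s i l - ?b i l) + Lt * (?b i l - ?e i l)\<^sup>2)"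
    by (rule amgm_lip)
  have "Phi s k - (1 - \<eta> * Lt) * tot (\<lambda>i l. (?b i l - s i l)\<^sup>2)
     = tot (\<lambda>i l. ((?b i l - s i l)\<^sup>2 - 2 * \<eta> * (FF ?b i l - FF ?e i l) * (?b i l - s i l) + \<eta> * Lt * (?b i l - ?e i l)\<^sup>2)
          - (1 - \<eta> * Lt) * (?b i l - s i l)\<^sup>2)"
    unfolding Phi_def by (simp only: tot_diff tot_scale)
  also have "\<dots> = \<eta> * tot (\<lambda>i l. Lt * (s i l - ?b i l)\<^sup>2 + 2 * (FF ?b i l - FF ?e i l) * (s i l - ?b i l) + Lt * (?b i l - ?e i l)\<^sup>2)"
    unfolding tot_scale[symmetric] by (intro tot_cong) (simp add: power2_eq_square algebra_simps)
  also have "\<dots> \<ge> 0" using h5 eta_pos by simp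
  finally show ?thesis by simp
qed

end

context frb begin

lemma ATv_cong: "(\<And>t. t < pp \<Longrightarrow> u t = v t) \<Longrightarrow> ATv B pp nn u = ATv B pp nn v"
  unfolding ATv_def by (intro ext) auto

lemma FF_blk_ATv: assumes i: "i < q"
  shows "FF U i = ATv (A i) p (n i) (\<lambda>t. \<rho> * (sumAx q n p A U t - c t) + U q t)"
proof (intro ext)
  fix l
  have "(\<Sum>j<q. \<Sum>t<p. \<rho> * (A i t l * Av (A j) p (n j) (U j) t)) = (\<Sum>t<p. \<Sum>j<q. \<rho> * (A i t l * Av (A j) p (n j) (U j) t))"
    by (rule sum.swap)
  then show "FF U i l = ATv (A i) p (n i) (\<lambda>t. \<rho> * (sumAx q n p A U t - c t) + U q t) l"
    using i unfolding FF_def MMx_def ATv_def sumAx_def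
    by (simp add: algebra_simps sum.distrib sum_subtractf sum_distrib_left)
qed

lemma sumAx_ge: "t \<ge> p \<Longrightarrow> sumAx q n p A U t = 0"
  unfolding sumAx_def Av_def by simp

lemma sol_is_solution: assumes s: "sol s" shows "is_solution q n p f A c s"
proof -
  have con: "sumAx q n p A s r = c r" if "r < p" for r
    using s that unfolding sol_def FF_def by auto
  have FFs: "FF s i = ATv (A i) p (n i) (s q)" if i: "i < q" for i
    unfolding FF_blk_ATv[OF i] by (rule ATv_cong) (simp add: con)
  show ?thesis unfolding is_solution_def
  proof (intro conjI)
    show "\<forall>i<q. s i \<in> Vsp (n i)" using s unfolding sol_def by auto
    show "\<forall>r<p. sumAx q n p A s r = c r" using con by auto
    show "\<forall>x'. (\<forall>i<q. x' i \<in> Vsp (n i)) \<and> (\<forall>r<p. sumAx q n p A x' r = c r) \<longrightarrow> (\<Sum>i<q. f i (s i)) \<le> (\<Sum>i<q. f i (x' i))"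
    proof (intro allI impI)
    fix x' assume x': "(\<forall>i<q. x' i \<in> Vsp (n i)) \<and> (\<forall>r<p. sumAx q n p A x' r = c r)"
    show "(\<Sum>i<q. f i (s i)) \<le> (\<Sum>i<q. f i (x' i))"
    proof (cases "\<exists>i<q. f i (x' i) = \<infinity>")
      case True
      then have "(\<Sum>i<q. f i (x' i)) = \<infinity>" by (auto simp: sum_Pinfty)
      then show ?thesis by simp
    next
      case False
      define a where "a i = real_of_ereal (f i (s i))" for i
      define b where "b i = real_of_ereal (f i (x' i))" for i
      have fa: "f i (s i) = ereal (a i)" if "i < q" for i
        using s that unfolding sol_def a_def by (cases "f i (s i)") auto
      have fb: "f i (x' i) = ereal (b i)" if "i < q" for i
      proof -
        have "f i (x' i) \<noteq> -\<infinity>" using f_prop[OF that] x' that unfolding proper_fn_def by auto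
        then show ?thesis using False that unfolding b_def by (cases "f i (x' i)") auto
      qed
      have ineq: "a i \<le> b i + inner_n (n i) (ATv (A i) p (n i) (s q)) (\<lambda>l. x' i l - s i l)" if i: "i < q" for i
      proof -
        have "real_of_ereal (f i (s i)) \<le> real_of_ereal (f i (x' i)) + inner_n (n i) (FF s i) (\<lambda>l. x' i l - s i l)"
          using s i x' False unfolding sol_def by auto
        then show ?thesis unfolding a_def b_def FFs[OF i] .
      qed
      have inner_eq: "inner_n (n i) (ATv (A i) p (n i) (s q)) (\<lambda>l. x' i l - s i l)
          = (\<Sum>t<p. s q t * (Av (A i) p (n i) (x' i) t - Av (A i) p (n i) (s i) t))" for i
        unfolding inner_n_def adjoint Av_dif ..
      have "(\<Sum>i<q. inner_n (n i) (ATv (A i) p (n i) (s q)) (\<lambda>l. x' i l - s i l))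
          = (\<Sum>t<p. s q t * (sumAx q n p A x' t - sumAx q n p A s t))"
        unfolding inner_eq sumAx_def sum_subtractf[symmetric] sum_distrib_left
        by (rule sum.swap)
      also have "\<dots> = 0" using x' con by simp
      finally have z: "(\<Sum>i<q. inner_n (n i) (ATv (A i) p (n i) (s q)) (\<lambda>l. x' i l - s i l)) = 0" .
      have "(\<Sum>i<q. a i) \<le> (\<Sum>i<q. b i + inner_n (n i) (ATv (A i) p (n i) (s q)) (\<lambda>l. x' i l - s i l))"
        by (rule sum_mono) (simp add: ineq)
      also have "\<dots> = (\<Sum>i<q. b i)" by (simp add: sum.distrib z)
      finally have "(\<Sum>i<q. a i) \<le> (\<Sum>i<q. b i)" .
      moreover have "(\<Sum>i<q. f i (s i)) = ereal (\<Sum>i<q. a i)" by (simp add: fa)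
      moreover have "(\<Sum>i<q. f i (x' i)) = ereal (\<Sum>i<q. b i)" by (simp add: fb)
      ultimately show ?thesis by simp
    qed
    qed
  qed
qed

end

context frb begin

lemma sum_upd_if: "(\<Sum>j<q. (if j = i then b else a j)) = (\<Sum>j<q. a j) + (b - a i)" if "i < q"
  for a :: "nat \<Rightarrow> real"
proof -
  have "(\<Sum>j<q. (if j = i then b else a j)) = (\<Sum>j<q. a j + (if j = i then b - a i else 0))"
    by (intro sum.cong) auto
  also have "\<dots> = (\<Sum>j<q. a j) + (b - a i)" using that by (simp add: sum.distrib)
  finally show ?thesis .
qed

lemma saddle_sol: "\<exists>s. sol s"
proof -
  obtain xs ys where hx: "\<forall>i<q. xs i \<in> Vsp (n i)" and hy: "ys \<in> Vsp p"
    and hL: "\<And>x' y'. (\<forall>i<q. x' i \<in> Vsp (n i)) \<Longrightarrow> y' \<in> Vsp p \<Longrightarrow>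
       Lag0 q n p f A c xs y' \<le> Lag0 q n p f A c xs ys \<and> Lag0 q n p f A c xs ys \<le> Lag0 q n p f A c x' ys"
    using saddle unfolding has_saddle_point_def by blast
  have nm: "f i v \<noteq> -\<infinity>" if "i < q" "v \<in> Vsp (n i)" for i v
    using f_prop[OF that(1)] that(2) unfolding proper_fn_def by auto
  have "\<forall>i<q. \<exists>v. v \<in> Vsp (n i) \<and> f i v \<noteq> \<infinity>"
    using f_prop unfolding proper_fn_def by blast
  then obtain x0 where x0: "\<And>i. i < q \<Longrightarrow> x0 i \<in> Vsp (n i) \<and> f i (x0 i) \<noteq> \<infinity>" by metis
  define R where "R t = sumAx q n p A xs t - c t" for t
  have Lag: "Lag0 q n p f A c x' y' = (\<Sum>i<q. f i (x' i)) + ereal (inner_n p y' (\<lambda>t. sumAx q n p A x' t - c t))" for x' y'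
    unfolding Lag0_def ..
  define b0 where "b0 i = real_of_ereal (f i (x0 i))" for i
  have f0: "f i (x0 i) = ereal (b0 i)" if "i < q" for i
    using x0[OF that] nm[OF that] unfolding b0_def by (cases "f i (x0 i)") auto
  have "(\<Sum>i<q. f i (x0 i)) = ereal (\<Sum>i<q. b0 i)"
    by (simp add: f0 cong: sum.cong_simp)
  then have "Lag0 q n p f A c x0 ys \<noteq> \<infinity>" unfolding Lag by simp
  moreover have "Lag0 q n p f A c xs ys \<le> Lag0 q n p f A c x0 ys" using hL[OF _ hy, of x0] x0 by blast
  ultimately have "Lag0 q n p f A c xs ys \<noteq> \<infinity>" by (metis ereal_infty_less_eq(1))
  then have "(\<Sum>i<q. f i (xs i)) \<noteq> \<infinity>" unfolding Lag by auto
  then have finx: "f i (xs i) \<noteq> \<infinity>" if "i < q" for i using that by (auto simp: sum_Pinfty)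
  define a where "a i = real_of_ereal (f i (xs i))" for i
  have fa: "f i (xs i) = ereal (a i)" if "i < q" for i
    using finx[OF that] nm[OF that] hx that unfolding a_def by (cases "f i (xs i)") auto
  have SA: "(\<Sum>i<q. f i (xs i)) = ereal (\<Sum>i<q. a i)" by (simp add: fa cong: sum.cong_simp)
  have RV: "R \<in> Vsp p" using c_in unfolding Vsp_def R_def by (auto simp: sumAx_ge)
  have R0: "R t = 0" if "t < p" for t
  proof -
    define y' where "y' t = ys t + R t" for t
    have "y' \<in> Vsp p" using hy RV unfolding Vsp_def y'_def by auto
    then have "Lag0 q n p f A c xs y' \<le> Lag0 q n p f A c xs ys" using hL[of xs y'] hx by blast
    then have "inner_n p y' R \<le> inner_n p ys R" unfolding Lag SA R_def[symmetric] by simp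
    moreover have "inner_n p y' R = inner_n p ys R + (\<Sum>t<p. R t * R t)"
      unfolding inner_n_def y'_def by (simp add: distrib_right sum.distrib)
    ultimately have le: "(\<Sum>t<p. R t * R t) \<le> 0" by simp
    have "(\<Sum>t<p. R t * R t) = 0" using le by (simp add: antisym sum_nonneg)
    then have "\<forall>t\<in>{..<p}. R t * R t = 0" by (subst (asm) sum_nonneg_eq_0_iff) auto
    then show ?thesis using that by simp
  qed
  define s where "s i = (if i < q then xs i else ys)" for i
  have sumAx_s: "sumAx q n p A s = sumAx q n p A xs" by (rule sumAx_cong) (simp add: s_def)
  have FFs: "FF s i = ATv (A i) p (n i) ys" if i: "i < q" for i
    unfolding FF_blk_ATv[OF i] by (rule ATv_cong) (use R0 in \<open>simp add: s_def sumAx_s R_def\<close>)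
  have blk: "real_of_ereal (f i (s i)) \<le> real_of_ereal (f i u) + inner_n (n i) (FF s i) (\<lambda>l. u l - s i l)"
    if i: "i < q" and u: "u \<in> Vsp (n i)" "f i u \<noteq> \<infinity>" for i u
  proof -
    define b where "b = real_of_ereal (f i u)"
    have fb: "f i u = ereal b" using u nm[OF i u(1)] unfolding b_def by (cases "f i u") auto
    define x' where "x' = xs(i := u)"
    have x'V: "\<forall>j<q. x' j \<in> Vsp (n j)" using hx u unfolding x'_def by auto
    have Sx': "(\<Sum>j<q. f j (x' j)) = ereal ((\<Sum>j<q. a j) + (b - a i))"
    proof -
      have "(\<Sum>j<q. f j (x' j)) = (\<Sum>j<q. ereal (if j = i then b else a j))"
        by (intro sum.cong) (auto simp: x'_def fa fb)
      also have "\<dots> = ereal ((\<Sum>j<q. a j) + (b - a i))" by (simp add: sum_upd_if[OF i])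
      finally show ?thesis .
    qed
    have sx': "sumAx q n p A x' t = sumAx q n p A xs t + (Av (A i) p (n i) u t - Av (A i) p (n i) (xs i) t)" for t
    proof -
      have "sumAx q n p A x' t = (\<Sum>j<q. (if j = i then Av (A i) p (n i) u t else Av (A j) p (n j) (xs j) t))"
        unfolding sumAx_def x'_def by (intro sum.cong) auto
      also have "\<dots> = sumAx q n p A xs t + (Av (A i) p (n i) u t - Av (A i) p (n i) (xs i) t)"
        unfolding sumAx_def by (rule sum_upd_if[OF i])
      finally show ?thesis .
    qed
    have inn: "inner_n p ys (\<lambda>t. sumAx q n p A x' t - c t) = inner_n (n i) (ATv (A i) p (n i) ys) (\<lambda>l. u l - xs i l)"
    proof -
      have "inner_n p ys (\<lambda>t. sumAx q n p A x' t - c t) = (\<Sum>t<p. ys t * (Av (A i) p (n i) u t - Av (A i) p (n i) (xs i) t))"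
        unfolding inner_n_def sx' using R0 by (intro sum.cong) (auto simp: R_def algebra_simps)
      also have "\<dots> = inner_n (n i) (ATv (A i) p (n i) ys) (\<lambda>l. u l - xs i l)"
        unfolding inner_n_def adjoint Av_dif ..
      finally show ?thesis .
    qed
    have in0: "inner_n p ys (\<lambda>t. sumAx q n p A xs t - c t) = 0"
      unfolding inner_n_def using R0 by (simp add: R_def)
    have "Lag0 q n p f A c xs ys \<le> Lag0 q n p f A c x' ys" using hL[OF x'V hy] by blast
    then have "(\<Sum>j<q. a j) \<le> (\<Sum>j<q. a j) + (b - a i) + inner_n (n i) (ATv (A i) p (n i) ys) (\<lambda>l. u l - xs i l)"
      unfolding Lag SA Sx' inn in0 by simp
    then show ?thesis using i unfolding FFs[OF i] b_def a_def by (simp add: s_def)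
  qed
  have "sol s" unfolding sol_def
  proof (intro conjI allI impI ballI)
    fix i assume i: "i < q"
    show "s i \<in> Vsp (n i)" using hx i by (simp add: s_def)
    show "f i (s i) \<noteq> \<infinity>" "f i (s i) \<noteq> -\<infinity>" using finx[OF i] nm[OF i] hx i by (auto simp: s_def)
    fix u assume "u \<in> Vsp (n i)" "f i u \<noteq> \<infinity>"
    then show "real_of_ereal (f i (s i)) \<le> real_of_ereal (f i u) + inner_n (n i) (FF s i) (\<lambda>l. u l - s i l)"
      using blk i by blast
  next
    fix r assume "r < p"
    then show "FF s q r = 0" using R0[of r] by (simp add: FF_def sumAx_s R_def)
  qed
  then show ?thesis by blast
qed

end


lemma bw_finite:
  fixes X :: "nat \<Rightarrow> 'a \<Rightarrow> real"
  assumes "finite I" "\<forall>j\<in>I. bounded (range (\<lambda>k. X k j))"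
  shows "\<exists>r L. strict_mono r \<and> (\<forall>j\<in>I. (\<lambda>k. X (r k) j) \<longlonglongrightarrow> L j)"
  using assms
proof (induction I rule: finite_induct)
  case empty
  show ?case by (rule exI[of _ id]) (auto simp: strict_mono_def)
next
  case (insert j I)
  then obtain r L where r: "strict_mono r" and L: "\<forall>j'\<in>I. (\<lambda>k. X (r k) j') \<longlonglongrightarrow> L j'" by auto
  have "bounded (range (\<lambda>k. X k j))" using insert.prems by auto
  then have "bounded (range (\<lambda>k. X (r k) j))" by (rule bounded_subset) auto
  then obtain l r2 where r2: "strict_mono r2" and l: "((\<lambda>k. X (r k) j) \<circ> r2) \<longlonglongrightarrow> l"
    using bounded_imp_convergent_subsequence by blast
  show ?case
  proof (intro exI conjI)
    show "strict_mono (r \<circ> r2)" using r r2 by (rule strict_mono_o)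
    show "\<forall>j'\<in>insert j I. (\<lambda>k. X ((r \<circ> r2) k) j') \<longlonglongrightarrow> (L(j := l)) j'"
    proof
      fix j' assume j': "j' \<in> insert j I"
      show "(\<lambda>k. X ((r \<circ> r2) k) j') \<longlonglongrightarrow> (L(j := l)) j'"
      proof (cases "j' = j")
        case True then show ?thesis using l by (simp add: comp_def)
      next
        case False
        then have "j' \<in> I" using j' by auto
        then have "((\<lambda>k. X (r k) j') \<circ> r2) \<longlonglongrightarrow> L j'" using L r2 by (intro LIMSEQ_subseq_LIMSEQ) auto
        then show ?thesis using False by (simp add: comp_def)
      qed
    qed
  qed
qed

lemma sq_to0: fixes g :: "nat \<Rightarrow> real"
  assumes "(\<lambda>k. (g k)\<^sup>2) \<longlonglongrightarrow> 0" shows "g \<longlonglongrightarrow> 0"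
proof (rule Lim_null_comparison[of _ "\<lambda>k. sqrt ((g k)\<^sup>2)"])
  show "\<forall>\<^sub>F k in sequentially. norm (g k) \<le> sqrt ((g k)\<^sup>2)" by simp
  show "(\<lambda>k. sqrt ((g k)\<^sup>2)) \<longlonglongrightarrow> 0" using tendsto_real_sqrt[OF assms] by simp
qed

lemma sandwich0: fixes g h :: "nat \<Rightarrow> real"
  assumes "\<And>k. 0 \<le> g k" "\<And>k. g k \<le> h k" "h \<longlonglongrightarrow> 0" shows "g \<longlonglongrightarrow> 0"
  by (rule tendsto_sandwich[where f="\<lambda>_. 0" and h=h]) (use assms in auto)

context frb begin

lemma delta_pos: "0 < 1 - 2 * \<eta> * Lt"
proof -
  have "\<eta> * (2 * Lt) < 1" using eta_bd Lt_pos by (simp add: field_simps)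
  then show ?thesis by (simp add: algebra_simps)
qed

lemma c1_pos: "0 < 1 - \<eta> * Lt"
proof -
  have "0 < \<eta> * Lt" using eta_pos Lt_pos by simp
  then show ?thesis using delta_pos by linarith
qed

lemma tot_sq_nonneg: "0 \<le> tot (\<lambda>i l. (P i l)\<^sup>2)" by (rule tot_nonneg) simp

lemma Phi_nonneg: "0 \<le> Phi s k"
proof -
  have "0 \<le> (1 - \<eta> * Lt) * tot (\<lambda>i l. (Z (Suc k) i l - s i l)\<^sup>2)"
    using c1_pos tot_sq_nonneg by simp
  then show ?thesis using Phi_lower[of k s] by linarith
qed

lemma Phi_dec: assumes "sol s" shows "decseq (Phi s)"
proof (rule decseq_SucI)
  fix k
  show "Phi s (Suc k) \<le> Phi s k"
  proof -
    have "0 \<le> (1 - 2 * \<eta> * Lt) * tot (\<lambda>i l. (Z (Suc (Suc k)) i l - Z (Suc k) i l)\<^sup>2)"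
      using delta_pos tot_sq_nonneg by simp
    then show ?thesis using fejer[OF assms, of k] by linarith
  qed
qed

lemma D_lim: assumes s: "sol s"
  shows "(\<lambda>k. tot (\<lambda>i l. (Z (Suc (Suc k)) i l - Z (Suc k) i l)\<^sup>2)) \<longlonglongrightarrow> 0"
proof -
  obtain L where L: "Phi s \<longlonglongrightarrow> L" using decseq_convergent[OF Phi_dec[OF s], of 0] Phi_nonneg by blast
  have "(\<lambda>k. Phi s k - Phi s (Suc k)) \<longlonglongrightarrow> L - L" by (intro tendsto_diff L LIMSEQ_Suc)
  then have "(\<lambda>k. (Phi s k - Phi s (Suc k)) / (1 - 2 * \<eta> * Lt)) \<longlonglongrightarrow> 0"
    by (intro tendsto_divide_zero) simp
  then show ?thesis
  proof (rule sandwich0[rotated 2])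
    fix k
    show "0 \<le> tot (\<lambda>i l. (Z (Suc (Suc k)) i l - Z (Suc k) i l)\<^sup>2)" by (rule tot_sq_nonneg)
    show "tot (\<lambda>i l. (Z (Suc (Suc k)) i l - Z (Suc k) i l)\<^sup>2) \<le> (Phi s k - Phi s (Suc k)) / (1 - 2 * \<eta> * Lt)"
      using fejer[OF s, of k] delta_pos by (simp add: field_simps)
  qed
qed

lemma tot_bound: assumes s: "sol s"
  shows "tot (\<lambda>i l. (Z (Suc k) i l - s i l)\<^sup>2) \<le> Phi s k / (1 - \<eta> * Lt)"
  using Phi_lower[of k s] c1_pos by (simp add: field_simps)

lemma cv_tot: assumes "\<And>i l. i < Suc q \<Longrightarrow> l < d i \<Longrightarrow> (\<lambda>j. V j i l) \<longlonglongrightarrow> z i l"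
  shows "(\<lambda>j. tot (\<lambda>i l. (V j i l - z i l)\<^sup>2)) \<longlonglongrightarrow> 0"
proof -
  have "(\<lambda>j. tot (\<lambda>i l. (V j i l - z i l)\<^sup>2)) \<longlonglongrightarrow> (\<Sum>i<Suc q. \<Sum>l<d i. (z i l - z i l)\<^sup>2)"
    unfolding tot_def by (intro tendsto_sum tendsto_intros assms) auto
  then show ?thesis by simp
qed

lemma cv_coord: assumes "(\<lambda>j. tot (\<lambda>i l. (V j i l - z i l)\<^sup>2)) \<longlonglongrightarrow> 0" "i < Suc q" "l < d i"
  shows "(\<lambda>j. V j i l) \<longlonglongrightarrow> z i l"
proof -
  have "(\<lambda>j. (V j i l - z i l)\<^sup>2) \<longlonglongrightarrow> 0"
    by (rule sandwich0[OF _ tot_coord[OF assms(2,3)] assms(1)]) simp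
  then have "(\<lambda>j. V j i l - z i l) \<longlonglongrightarrow> 0" by (rule sq_to0)
  then show ?thesis by (simp add: LIM_zero_iff)
qed

lemma cv_FF: assumes "(\<lambda>j. tot (\<lambda>i l. (V j i l - z i l)\<^sup>2)) \<longlonglongrightarrow> 0"
  shows "(\<lambda>j. tot (\<lambda>i l. (FF (V j) i l - FF z i l)\<^sup>2)) \<longlonglongrightarrow> 0"
proof (rule sandwich0)
  fix j
  show "0 \<le> tot (\<lambda>i l. (FF (V j) i l - FF z i l)\<^sup>2)" by (rule tot_sq_nonneg)
  show "tot (\<lambda>i l. (FF (V j) i l - FF z i l)\<^sup>2) \<le> Lt\<^sup>2 * tot (\<lambda>i l. (V j i l - z i l)\<^sup>2)"
    using lip[of "V j" z] unfolding ip_tot dif_def power2_eq_square .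
  show "(\<lambda>j. Lt\<^sup>2 * tot (\<lambda>i l. (V j i l - z i l)\<^sup>2)) \<longlonglongrightarrow> 0"
    using tendsto_mult_right_zero[OF assms] .
qed

end

context frb begin

lemma step_conv: assumes s0: "sol s0" and m: "strict_mono m"
  and h: "\<And>i l. i < Suc q \<Longrightarrow> l < d i \<Longrightarrow> (\<lambda>j. Z (Suc (m j)) i l) \<longlonglongrightarrow> zb i l"
  and il: "i < Suc q" "l < d i"
  shows "(\<lambda>j. Z (Suc (Suc (m j))) i l) \<longlonglongrightarrow> zb i l"
proof -
  have "((\<lambda>k. tot (\<lambda>i l. (Z (Suc (Suc k)) i l - Z (Suc k) i l)\<^sup>2)) \<circ> m) \<longlonglongrightarrow> 0"
    by (rule LIMSEQ_subseq_LIMSEQ[OF D_lim[OF s0] m])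
  then have "(\<lambda>j. (Z (Suc (Suc (m j))) i l - Z (Suc (m j)) i l)\<^sup>2) \<longlonglongrightarrow> 0"
    by (intro sandwich0[OF _ tot_coord[OF il]]) (auto simp: comp_def)
  then have "(\<lambda>j. Z (Suc (Suc (m j))) i l - Z (Suc (m j)) i l) \<longlonglongrightarrow> 0" by (rule sq_to0)
  then have "(\<lambda>j. (Z (Suc (Suc (m j))) i l - Z (Suc (m j)) i l) + Z (Suc (m j)) i l) \<longlonglongrightarrow> 0 + zb i l"
    by (intro tendsto_add h il)
  then show ?thesis by simp
qed

lemma blk_le_tot: "i < q \<Longrightarrow> (\<Sum>l<n i. (P i l)\<^sup>2) \<le> tot (\<lambda>i l. (P i l)\<^sup>2)"
  unfolding tot_def
  by (rule order_trans[OF _ member_le_sum[of i "{..<Suc q}" "\<lambda>i. \<Sum>l<d i. (P i l)\<^sup>2"]])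
     (auto simp: d_def intro: sum_nonneg)

lemma main: "\<exists>zb. sol zb \<and> (\<lambda>k. tot (\<lambda>i l. (Z (Suc k) i l - zb i l)\<^sup>2)) \<longlonglongrightarrow> 0"
proof -
  obtain s0 where s0: "sol s0" using saddle_sol by blast
  define B where "B = Phi s0 0 / (1 - \<eta> * Lt)"
  have tb: "tot (\<lambda>i l. (Z (Suc k) i l - s0 i l)\<^sup>2) \<le> B" for k
  proof -
    have "Phi s0 k \<le> Phi s0 0" by (rule decseqD[OF Phi_dec[OF s0]]) simp
    then have "Phi s0 k / (1 - \<eta> * Lt) \<le> B" unfolding B_def using c1_pos by (simp add: divide_right_mono)
    then show ?thesis using tot_bound[OF s0, of k] by linarith
  qed
  define I where "I = Sigma {..<Suc q} (\<lambda>i. {..<d i})"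
  have fI: "finite I" unfolding I_def by auto
  define X where "X k = (\<lambda>(i, l). Z (Suc k) i l)" for k
  have bd: "\<forall>j\<in>I. bounded (range (\<lambda>k. X k j))"
  proof
    fix j assume "j \<in> I"
    then obtain i l where j: "j = (i, l)" and il: "i < Suc q" "l < d i" unfolding I_def by auto
    have "\<bar>X k j\<bar> \<le> \<bar>s0 i l\<bar> + sqrt B" for k
    proof -
      have "(Z (Suc k) i l - s0 i l)\<^sup>2 \<le> B" using tot_coord[OF il, of "\<lambda>i l. Z (Suc k) i l - s0 i l"] tb[of k] by simp
      then have "\<bar>Z (Suc k) i l - s0 i l\<bar> \<le> sqrt B" by (intro real_le_rsqrt) simp
      then show ?thesis unfolding X_def j by simp
    qed
    then show "bounded (range (\<lambda>k. X k j))" unfolding bounded_real by blast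
  qed
  obtain r Lm where r: "strict_mono r" and Lm: "\<forall>j\<in>I. (\<lambda>k. X (r k) j) \<longlonglongrightarrow> Lm j"
    using bw_finite[OF fI bd] by blast
  define zb where "zb i l = (if i < Suc q \<and> l < d i then Lm (i, l) else 0)" for i l
  have c0: "(\<lambda>j. Z (Suc (r j)) i l) \<longlonglongrightarrow> zb i l" if "i < Suc q" "l < d i" for i l
    using Lm that unfolding I_def X_def zb_def by auto
  define K where "K j = Suc (r j)" for j
  have K: "strict_mono K" using r unfolding K_def strict_mono_def by auto
  have cK0: "(\<lambda>j. Z (K j) i l) \<longlonglongrightarrow> zb i l" if "i < Suc q" "l < d i" for i l
    using c0[OF that] unfolding K_def .
  have cK1: "(\<lambda>j. Z (Suc (K j)) i l) \<longlonglongrightarrow> zb i l" if "i < Suc q" "l < d i" for i l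
    using step_conv[OF s0 r c0 that] unfolding K_def .
  have cK2: "(\<lambda>j. Z (Suc (Suc (K j))) i l) \<longlonglongrightarrow> zb i l" if "i < Suc q" "l < d i" for i l
    using step_conv[OF s0 K cK1 that] .
  have fK0: "(\<lambda>j. FF (Z (K j)) i l) \<longlonglongrightarrow> FF zb i l" if "i < Suc q" "l < d i" for i l
    by (rule cv_coord[OF cv_FF[OF cv_tot[OF cK0]] that])
  have fK1: "(\<lambda>j. FF (Z (Suc (K j))) i l) \<longlonglongrightarrow> FF zb i l" if "i < Suc q" "l < d i" for i l
    by (rule cv_coord[OF cv_FF[OF cv_tot[OF cK1]] that])
  have Wc: "Z (Suc (Suc k)) i l = Z (Suc k) i l - \<eta> * (2 * FF (Z (Suc k)) i l - FF (Z k) i l)" if "i = q" for k i l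
    using fun_cong[OF W_q[of k], of l] that unfolding W_def by simp
  have FFq: "FF zb q r' = 0" if r': "r' < p" for r'
  proof -
    have il: "q < Suc q" "r' < d q" using r' by (auto simp: d_def)
    have "(\<lambda>j. Z (Suc (Suc (K j))) q r') \<longlonglongrightarrow> zb q r' - \<eta> * (2 * FF zb q r' - FF zb q r')"
      unfolding Wc[OF refl] by (intro tendsto_intros cK1 fK1 fK0 il)
    from LIMSEQ_unique[OF cK2[OF il] this] show ?thesis using eta_pos by simp
  qed
  have blk: "zb i \<in> Vsp (n i) \<and> f i (zb i) \<noteq> \<infinity> \<and> f i (zb i) \<noteq> -\<infinity> \<and>
      (\<forall>u\<in>Vsp (n i). f i u \<noteq> \<infinity> \<longrightarrow>
          real_of_ereal (f i (zb i)) \<le> real_of_ereal (f i u) + inner_n (n i) (FF zb i) (\<lambda>l. u l - zb i l))"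
    if i: "i < q" for i
  proof -
    have di: "d i = n i" using i by (simp add: d_def)
    have iq: "i < Suc q" using i by simp
    have zV: "zb i \<in> Vsp (n i)" unfolding Vsp_def zb_def di by auto
    define a where "a j = Z (Suc (Suc (K j))) i" for j
    have va: "a j \<in> Vsp (n i) \<and> f i (a j) \<noteq> \<infinity> \<and> f i (a j) \<noteq> -\<infinity> \<and>
      (\<forall>u\<in>Vsp (n i). f i u \<noteq> \<infinity> \<longrightarrow> \<eta> * real_of_ereal (f i (a j))
        + inner_n (n i) (\<lambda>l. W (K j) i l - a j l) (\<lambda>l. u l - a j l) \<le> \<eta> * real_of_ereal (f i u))" for j
      unfolding a_def by (rule vi[OF i])
    have ca: "(\<lambda>j. a j l) \<longlonglongrightarrow> zb i l" if "l < n i" for l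
      unfolding a_def using cK2[OF iq] that di by simp
    have nrm: "(\<lambda>j. norm2 (n i) (\<lambda>l. a j l - zb i l)) \<longlonglongrightarrow> 0"
    proof -
      have "(\<lambda>j. norm2 (n i) (\<lambda>l. a j l - zb i l)) \<longlonglongrightarrow> sqrt (\<Sum>l<n i. (zb i l - zb i l)\<^sup>2)"
        unfolding norm2_def by (intro tendsto_intros tendsto_sum ca) auto
      then show ?thesis by simp
    qed
    have cinn: "(\<lambda>j. inner_n (n i) (\<lambda>l. W (K j) i l - a j l) (\<lambda>l. u l - a j l))
        \<longlonglongrightarrow> - \<eta> * inner_n (n i) (FF zb i) (\<lambda>l. u l - zb i l)" for u
    proof -
      have "(\<lambda>j. inner_n (n i) (\<lambda>l. W (K j) i l - a j l) (\<lambda>l. u l - a j l))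
        \<longlonglongrightarrow> (\<Sum>l<n i. (zb i l - \<eta> * (2 * FF zb i l - FF zb i l) - zb i l) * (u l - zb i l))"
        unfolding inner_n_def W_def
        by (intro tendsto_sum tendsto_intros ca cK1[OF iq] fK1[OF iq] fK0[OF iq]) (auto simp: di)
      also have "(\<Sum>l<n i. (zb i l - \<eta> * (2 * FF zb i l - FF zb i l) - zb i l) * (u l - zb i l))
          = - \<eta> * inner_n (n i) (FF zb i) (\<lambda>l. u l - zb i l)"
        unfolding inner_n_def by (simp add: sum_distrib_left algebra_simps)
      finally show ?thesis .
    qed
    have cl: "closed_fn (n i) (f i)" and pr: "proper_fn (n i) (f i)" using f_prop[OF i] by auto
    have key: "f i (zb i) \<le> ereal (real_of_ereal (f i u) + inner_n (n i) (FF zb i) (\<lambda>l. u l - zb i l))"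
      if u: "u \<in> Vsp (n i)" "f i u \<noteq> \<infinity>" for u
    proof -
      define rr where "rr j = real_of_ereal (f i u) - inner_n (n i) (\<lambda>l. W (K j) i l - a j l) (\<lambda>l. u l - a j l) / \<eta>" for j
      have rle: "f i (a j) \<le> ereal (rr j)" for j
      proof -
        have "\<eta> * real_of_ereal (f i (a j)) + inner_n (n i) (\<lambda>l. W (K j) i l - a j l) (\<lambda>l. u l - a j l) \<le> \<eta> * real_of_ereal (f i u)"
          using va[of j] u by blast
        then have "real_of_ereal (f i (a j)) \<le> rr j" unfolding rr_def using eta_pos by (simp add: field_simps)
        moreover have "f i (a j) = ereal (real_of_ereal (f i (a j)))" using va[of j] by (cases "f i (a j)") auto
        ultimately show ?thesis by (metis ereal_less_eq(3))
      qed
      have "rr \<longlonglongrightarrow> real_of_ereal (f i u) - (- \<eta> * inner_n (n i) (FF zb i) (\<lambda>l. u l - zb i l)) / \<eta>"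
        unfolding rr_def by (intro tendsto_intros cinn) (use eta_pos in simp)
      then have rl: "rr \<longlonglongrightarrow> real_of_ereal (f i u) + inner_n (n i) (FF zb i) (\<lambda>l. u l - zb i l)"
        using eta_pos by simp
      show ?thesis
        using cl[unfolded closed_fn_def, rule_format, of a rr "zb i"] va rle zV nrm rl by blast
    qed
    obtain u0 where u0: "u0 \<in> Vsp (n i)" "f i u0 \<noteq> \<infinity>" using pr unfolding proper_fn_def by auto
    have fin: "f i (zb i) \<noteq> \<infinity>" using key[OF u0] by auto
    have nm: "f i (zb i) \<noteq> -\<infinity>" using pr zV unfolding proper_fn_def by auto
    have "real_of_ereal (f i (zb i)) \<le> real_of_ereal (f i u) + inner_n (n i) (FF zb i) (\<lambda>l. u l - zb i l)"
      if u: "u \<in> Vsp (n i)" "f i u \<noteq> \<infinity>" for u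
      using key[OF u] fin nm by (cases "f i (zb i)") auto
    then show ?thesis using zV fin nm by blast
  qed
  have szb: "sol zb" unfolding sol_def using blk FFq by blast
  \<comment> \<open>Fejer monotonicity with respect to the limit point\<close>
  obtain Lz where Lz: "Phi zb \<longlonglongrightarrow> Lz" using decseq_convergent[OF Phi_dec[OF szb], of 0] Phi_nonneg by blast
  have "(\<lambda>j. Phi zb (K j)) \<longlonglongrightarrow> (\<Sum>i<Suc q. \<Sum>l<d i. (zb i l - zb i l)\<^sup>2
     - 2 * \<eta> * (FF zb i l - FF zb i l) * (zb i l - zb i l) + \<eta> * Lt * (zb i l - zb i l)\<^sup>2)"
    unfolding Phi_def tot_def by (intro tendsto_sum tendsto_intros cK0 cK1 fK0 fK1) auto
  then have "(Phi zb \<circ> K) \<longlonglongrightarrow> 0" by (simp add: comp_def)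
  moreover have "(Phi zb \<circ> K) \<longlonglongrightarrow> Lz" by (rule LIMSEQ_subseq_LIMSEQ[OF Lz K])
  ultimately have "Lz = 0" using LIMSEQ_unique by blast
  then have P0: "Phi zb \<longlonglongrightarrow> 0" using Lz by simp
  have "(\<lambda>k. tot (\<lambda>i l. (Z (Suc k) i l - zb i l)\<^sup>2)) \<longlonglongrightarrow> 0"
  proof (rule sandwich0)
    fix k
    show "0 \<le> tot (\<lambda>i l. (Z (Suc k) i l - zb i l)\<^sup>2)" by (rule tot_sq_nonneg)
    show "tot (\<lambda>i l. (Z (Suc k) i l - zb i l)\<^sup>2) \<le> Phi zb k / (1 - \<eta> * Lt)" by (rule tot_bound[OF szb])
    show "(\<lambda>k. Phi zb k / (1 - \<eta> * Lt)) \<longlonglongrightarrow> 0" using tendsto_divide_zero[OF P0] .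
  qed
  then show ?thesis using szb by blast
qed

lemma final: "\<exists>xs. (\<forall>i<q. xs i \<in> Vsp (n i) \<and> (\<lambda>k. norm2 (n i) (\<lambda>l. x i (int k) l - xs i l)) \<longlonglongrightarrow> 0)
             \<and> is_solution q n p f A c xs"
proof -
  obtain zb where szb: "sol zb" and cv: "(\<lambda>k. tot (\<lambda>i l. (Z (Suc k) i l - zb i l)\<^sup>2)) \<longlonglongrightarrow> 0"
    using main by blast
  have "(\<lambda>k. norm2 (n i) (\<lambda>l. x i (int k) l - zb i l)) \<longlonglongrightarrow> 0" if i: "i < q" for i
  proof (rule sandwich0)
    fix k
    show "0 \<le> norm2 (n i) (\<lambda>l. x i (int k) l - zb i l)" by (rule norm2_nonneg)
    have "(\<Sum>l<n i. (x i (int k) l - zb i l)\<^sup>2) \<le> tot (\<lambda>i l. (Z (Suc k) i l - zb i l)\<^sup>2)"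
      using blk_le_tot[OF i, of "\<lambda>i l. Z (Suc k) i l - zb i l"] i by (simp add: Z_blk)
    then show "norm2 (n i) (\<lambda>l. x i (int k) l - zb i l) \<le> sqrt (tot (\<lambda>i l. (Z (Suc k) i l - zb i l)\<^sup>2))"
      unfolding norm2_def by (rule real_sqrt_le_mono)
    show "(\<lambda>k. sqrt (tot (\<lambda>i l. (Z (Suc k) i l - zb i l)\<^sup>2))) \<longlonglongrightarrow> 0"
      using tendsto_real_sqrt[OF cv] by simp
  qed
  moreover have "\<forall>i<q. zb i \<in> Vsp (n i)" using szb unfolding sol_def by auto
  ultimately show ?thesis using sol_is_solution[OF szb] by blast
qed

end


theorem theorem2:
  fixes q p :: nat and n :: "nat \<Rightarrow> nat"
    and f :: "nat \<Rightarrow> (nat \<Rightarrow> real) \<Rightarrow> ereal"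
    and A :: "nat \<Rightarrow> nat \<Rightarrow> nat \<Rightarrow> real"
    and c :: "nat \<Rightarrow> real"
    and \<rho> Lt \<eta> :: real
    and x :: "nat \<Rightarrow> int \<Rightarrow> nat \<Rightarrow> real"
    and y :: "int \<Rightarrow> nat \<Rightarrow> real"
  assumes f_prop: "\<And>i. i < q \<Longrightarrow> proper_fn (n i) (f i) \<and> closed_fn (n i) (f i) \<and> convex_fn (n i) (f i)"
    and c_in: "c \<in> Vsp p"
    and saddle: "has_saddle_point q n p f A c"
    and rho: "0 \<le> \<rho>"
    and Lt: "0 < Lt" "spec_norm (off n q + p) (Mtilde q n p A \<rho>) \<le> Lt"
    and eta: "0 < \<eta>" "\<eta> < 1 / (2 * Lt)"
    and init_x: "\<And>i. i < q \<Longrightarrow> x i (-1) \<in> Vsp (n i) \<and> x i 0 \<in> Vsp (n i)"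
    and init_y: "y (-1) \<in> Vsp p" "y 0 \<in> Vsp p"
    and x_step: "\<And>i k. i < q \<Longrightarrow>
       (let xhat = (\<lambda>l. x i (int k) l
              - 2 * \<eta> * ATv (A i) p (n i) (y (int k)) l
              - 2 * \<eta> * \<rho> * (\<Sum>j<q. ATv (A i) p (n i) (Av (A j) p (n j) (x j (int k))) l)
              + \<eta> * ATv (A i) p (n i) (y (int k - 1)) l
              + \<eta> * \<rho> * (\<Sum>j<q. ATv (A i) p (n i) (Av (A j) p (n j) (x j (int k - 1))) l)
              + \<eta> * \<rho> * ATv (A i) p (n i) c l)
        in x i (int k + 1) \<in> Vsp (n i) \<and>
           (\<forall>u\<in>Vsp (n i).
              ereal \<eta> * f i (x i (int k + 1)) + ereal ((norm2 (n i) (\<lambda>l. x i (int k + 1) l - xhat l))\<^sup>2 / 2)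
              \<le> ereal \<eta> * f i u + ereal ((norm2 (n i) (\<lambda>l. u l - xhat l))\<^sup>2 / 2)))"
    and y_step: "\<And>k. y (int k + 1) = (\<lambda>r. y (int k) r
              + 2 * \<eta> * sumAx q n p A (\<lambda>i. x i (int k)) r
              - \<eta> * sumAx q n p A (\<lambda>i. x i (int k - 1)) r
              - \<eta> * c r)"
  shows "\<exists>xs. (\<forall>i<q. xs i \<in> Vsp (n i) \<and> (\<lambda>k. norm2 (n i) (\<lambda>l. x i (int k) l - xs i l)) \<longlonglongrightarrow> 0)
             \<and> is_solution q n p f A c xs"
proof -
  interpret frb q p n f A c \<rho> Lt \<eta> x y
  proof (unfold_locales)
    show "\<And>i. i < q \<Longrightarrow> proper_fn (n i) (f i) \<and> closed_fn (n i) (f i) \<and> convex_fn (n i) (f i)" by (rule f_prop)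
  qed (use c_in saddle rho Lt eta init_x init_y x_step y_step in \<open>blast+\<close>)
  show ?thesis by (rule final)
qed

end
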